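(* Under Strategy 1 (described in the context), for an attack cycle $\omega$ let $\Delta(\omega)=\sum_{\mathfrak b}\delta(\mathfrak b)$, the sum over all uncles $\mathfrak b$ created in $\omega$ that are referred, where $\delta(\mathfrak b)$ is the distance between $\mathfrak b$ and its nephew. Then $$\mathbb{E}[\Delta]=pq+\frac{pq^2\gamma}{(p-q)^2}\Bigl(2p-q-\bigl(p+n_1(p-q)\bigr)\Bigl(\frac qp\Bigr)^{n_1-1}\Bigr)+\frac{(1-\gamma)q}{p}\Bigl(q(1+p)-(1+n_1p)q^{n_1}\Bigr).$$
   Context: Honest hashrate $p$, attacker hashrate $q$, $p+q=1$, $0<q<p$; $\gamma\in[0,1]$ is the fraction of honest hashrate mining on the attacker's block during a public competition between equal-height blocks. Attack cycles are i.i.d. words in S (attacker block) and H (honest block): H, SHS, SHH, or SSwH with $w$ a Dyck word; $\mathbb{P}[H]=p$, $\mathbb{P}[SHS]=pq^2$, $\mathbb{P}[SHH]=p^2q$, $\mathbb{P}[SSwH]=q^2p(pq)^{|w|}$ ($|w|$ half the length of $w$). Ethereum rules: an uncle is a non-official block whose parent is official; a nephew (official block) may refer an uncle at distance (height difference) at most $n_1$ ($n_1\ge2$ an integer). Strategy 1: the attacker withholds his blocks, and each time the honest miners publish a block he publishes the part of his secret fork of the same height as the public honest chain (a fraction $\gamma$ of honest hashrate then mines on the attacker's branch); the attacker's fork wins in cycles starting with SS; all miners refer all possible uncles. *)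

theory Defs
  imports "HOL-Analysis.Analysis"
begin

datatype letter = S | H

fun dyck_aux :: "nat \<Rightarrow> letter list \<Rightarrow> bool" where
  "dyck_aux n [] = (n = 0)"
| "dyck_aux n (S # w) = dyck_aux (Suc n) w"
| "dyck_aux 0 (H # w) = False"
| "dyck_aux (Suc n) (H # w) = dyck_aux n w"

definition dyck :: "letter list \<Rightarrow> bool" where
  "dyck w = dyck_aux 0 w"

definition word_prob :: "real \<Rightarrow> real \<Rightarrow> letter list \<Rightarrow> real" where
  "word_prob p q w =
     (if w = [H] then p
      else if w = [S, H, S] then p * q^2
      else if w = [S, H, H] then p^2 * q
      else if (\<exists>v. dyck v \<and> w = [S, S] @ v @ [H]) then q^2 * p * (p * q) ^ ((length w - 3) div 2)
      else 0)"

text \<open>Att: the attacker mines a block (always on top of his own fork);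
  HonH: an honest miner mines on the tip of the honest branch;
  HonA: an honest miner (fraction gamma of honest hashrate during a competition) mines on the
  attacker's published block of the same height as the public honest chain.\<close>
datatype event = Att | HonH | HonA

fun letter_of :: "event \<Rightarrow> letter" where
  "letter_of Att = S"
| "letter_of HonH = H"
| "letter_of HonA = H"

definition is_honest :: "event \<Rightarrow> bool" where
  "is_honest e \<longleftrightarrow> e \<noteq> Att"

text \<open>The first honest block of a cycle is mined when there is no public competition (so it is
  on the honest tip); every later honest block of the cycle is mined during a competition and is
  on the attacker's branch with probability gamma, independently.\<close>
definition cycle_prob :: "real \<Rightarrow> real \<Rightarrow> real \<Rightarrow> event list \<Rightarrow> real" where
  "cycle_prob p q \<gamma> ev =
     (let hs = filter is_honest ev in
      if hs \<noteq> [] \<and> hd hs = HonH then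
        word_prob p q (map letter_of ev) *
        prod_list (map (\<lambda>e. if e = HonA then \<gamma> else 1 - \<gamma>) (tl hs))
      else 0)"

text \<open>Blocks of a cycle are indexed by their mining order 0,1,...; a block is (kind, height,
  parent), heights relative to the official block at the start of the cycle (height 0), and parent
  None means that starting block (which is official).\<close>
type_synonym block = "event \<times> nat \<times> nat option"

definition last_idx :: "(block \<Rightarrow> bool) \<Rightarrow> block list \<Rightarrow> nat option" where
  "last_idx P bs = (let js = filter (\<lambda>j. P (bs ! j)) [0..<length bs] in
                     if js = [] then None else Some (last js))"

definition hgt :: "block list \<Rightarrow> nat option \<Rightarrow> nat" where
  "hgt bs j = (case j of None \<Rightarrow> 0 | Some i \<Rightarrow> fst (snd (bs ! i)))"

definition atk_tip :: "block list \<Rightarrow> nat option" where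
  "atk_tip bs = last_idx (\<lambda>b. fst b = Att) bs"

definition hon_tip :: "block list \<Rightarrow> nat option" where
  "hon_tip bs = last_idx (\<lambda>b. fst b \<noteq> Att) bs"

definition atk_at :: "block list \<Rightarrow> nat \<Rightarrow> nat option" where
  "atk_at bs h = (if h = 0 then None else last_idx (\<lambda>b. fst b = Att \<and> fst (snd b) = h) bs)"

fun new_block :: "block list \<Rightarrow> event \<Rightarrow> block" where
  "new_block bs Att = (Att, Suc (hgt bs (atk_tip bs)), atk_tip bs)"
| "new_block bs HonH = (HonH, Suc (hgt bs (hon_tip bs)), hon_tip bs)"
| "new_block bs HonA =
     (let par = atk_at bs (hgt bs (hon_tip bs)) in (HonA, Suc (hgt bs par), par))"

fun build :: "block list \<Rightarrow> event list \<Rightarrow> block list" where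
  "build bs [] = bs"
| "build bs (e # es) = build (bs @ [new_block bs e]) es"

definition blocks :: "event list \<Rightarrow> block list" where
  "blocks ev = build [] ev"

fun chain :: "nat \<Rightarrow> block list \<Rightarrow> nat option \<Rightarrow> nat set" where
  "chain 0 bs j = {}"
| "chain (Suc n) bs None = {}"
| "chain (Suc n) bs (Some j) = insert j (chain n bs (snd (snd (bs ! j))))"

definition top_height :: "event list \<Rightarrow> nat" where
  "top_height ev = Max (insert 0 ((\<lambda>b. fst (snd b)) ` set (blocks ev)))"

text \<open>At the end of the cycle the longest chain (the one through the highest block) is official.\<close>
definition top_block :: "event list \<Rightarrow> nat option" where
  "top_block ev = last_idx (\<lambda>b. fst (snd b) = top_height ev) (blocks ev)"

definition official :: "event list \<Rightarrow> nat set" where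
  "official ev = chain (Suc (length ev)) (blocks ev) (top_block ev)"

definition bheight :: "event list \<Rightarrow> nat \<Rightarrow> nat" where
  "bheight ev j = fst (snd (blocks ev ! j))"

definition bparent :: "event list \<Rightarrow> nat \<Rightarrow> nat option" where
  "bparent ev j = snd (snd (blocks ev ! j))"

definition is_uncle :: "event list \<Rightarrow> nat \<Rightarrow> bool" where
  "is_uncle ev j \<longleftrightarrow> j < length ev \<and> j \<notin> official ev \<and>
     (case bparent ev j of None \<Rightarrow> True | Some i \<Rightarrow> i \<in> official ev)"

text \<open>Publication time: honest blocks are published immediately; an attacker block of height h is
  published when the honest chain reaches height h (or at the end of the cycle).\<close>
definition pub_time :: "event list \<Rightarrow> nat \<Rightarrow> nat" where
  "pub_time ev j =
     (if ev ! j \<noteq> Att then j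
      else (let ks = filter (\<lambda>k. ev ! k \<noteq> Att \<and> bheight ev k \<ge> bheight ev j) [0..<length ev] in
            if ks = [] then length ev else hd ks))"

text \<open>Height of the nephew: the first official block mined after the publication of the uncle; if
  there is none in the cycle, it is the first official block of the next cycle, at height
  top_height + 1.\<close>
definition nephew_height :: "event list \<Rightarrow> nat \<Rightarrow> nat" where
  "nephew_height ev j =
     (let ks = filter (\<lambda>k. k \<in> official ev \<and> k > pub_time ev j) [0..<length ev] in
      if ks = [] then Suc (top_height ev) else bheight ev (hd ks))"

definition dist :: "event list \<Rightarrow> nat \<Rightarrow> nat" where
  "dist ev j = nephew_height ev j - bheight ev j"

text \<open>Delta: sum of the distances of the uncles created in the cycle that are referred (distance
  at most n1).\<close>
definition Delta :: "nat \<Rightarrow> event list \<Rightarrow> nat" where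
  "Delta n1 ev = (\<Sum>j \<in> {j. is_uncle ev j \<and> dist ev j \<le> n1}. dist ev j)"

end

theory Submission
  imports Defs
begin

datatype etree = Lf event | Nd etree etree

lemma UNIV_event: "(UNIV::event set) = {Att, HonH, HonA}"
  using event.exhaust by auto

lemma finite_event[simp]: "finite (UNIV::event set)"
  by (simp add: UNIV_event)

fun enc :: "etree \<Rightarrow> event list" where
  "enc (Lf e) = [e]"
| "enc (Nd a b) = Att # enc a @ enc b"

fun lvs :: "etree \<Rightarrow> event list" where
  "lvs (Lf e) = [e]"
| "lvs (Nd a b) = lvs a @ lvs b"

fun nodes :: "etree \<Rightarrow> nat" where
  "nodes (Lf e) = 0"
| "nodes (Nd a b) = Suc (nodes a + nodes b)"

fun dp :: "etree \<Rightarrow> nat" where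
  "dp (Lf e) = 0"
| "dp (Nd a b) = Suc (max (dp a) (dp b))"

definition lw :: "real \<Rightarrow> real \<Rightarrow> event \<Rightarrow> real" where
  "lw p \<gamma> e = (case e of Att \<Rightarrow> 0 | HonH \<Rightarrow> p * (1 - \<gamma>) | HonA \<Rightarrow> p * \<gamma>)"

fun wt :: "real \<Rightarrow> real \<Rightarrow> real \<Rightarrow> bool \<Rightarrow> etree \<Rightarrow> real" where
  "wt p q \<gamma> fl (Lf e) = (if fl then (if e = HonH then p else 0) else lw p \<gamma> e)"
| "wt p q \<gamma> fl (Nd a b) = q * wt p q \<gamma> fl a * wt p q \<gamma> False b"

fun st :: "nat \<Rightarrow> bool \<Rightarrow> nat \<Rightarrow> etree \<Rightarrow> nat" where
  "st n1 fl L (Lf e) = (if (fl \<or> e = HonA) \<and> L \<le> n1 then L else 0)"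
| "st n1 fl L (Nd a b) = st n1 fl (Suc L) a + st n1 False L b"

fun Tn :: "nat \<Rightarrow> etree set" where
  "Tn 0 = range Lf"
| "Tn (Suc n) = range Lf \<union> (\<lambda>(a,b). Nd a b) ` (Tn n \<times> Tn n)"

lemma finite_Tn: "finite (Tn n)"
  by (induction n) auto

lemma dp_Tn: "dp t \<le> n \<Longrightarrow> t \<in> Tn n"
proof (induction t arbitrary: n)
  case (Lf e) then show ?case by (cases n) auto
next
  case (Nd a b) then show ?case by (cases n) auto
qed

lemma finite_sub_Tn: "finite F \<Longrightarrow> \<exists>n. F \<subseteq> Tn n"
proof -
  assume "finite F"
  then have "\<forall>t\<in>F. dp t \<le> Max (dp ` F)" by auto
  then show ?thesis using dp_Tn by blast
qed

lemma sum_prod_split: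
  fixes f g :: "'a \<Rightarrow> real"
  shows "(\<Sum>(a,b)\<in>A \<times> B. f a * g b) = sum f A * sum g B"
  by (simp add: sum_product sum.cartesian_product)

lemma sum_Tn_Suc:
  fixes h :: "etree \<Rightarrow> real"
  shows "sum h (Tn (Suc n)) = (\<Sum>e\<in>UNIV. h (Lf e)) + (\<Sum>(a,b)\<in>Tn n \<times> Tn n. h (Nd a b))"
proof -
  have d: "range Lf \<inter> (\<lambda>(a,b). Nd a b) ` (Tn n \<times> Tn n) = {}" by auto
  have "sum h (Tn (Suc n)) = sum h (range Lf) + sum h ((\<lambda>(a,b). Nd a b) ` (Tn n \<times> Tn n))"
    by (simp add: sum.union_disjoint[OF _ _ d] finite_Tn)
  also have "sum h (range Lf) = (\<Sum>e\<in>UNIV. h (Lf e))"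
    by (subst sum.reindex) (auto simp: inj_on_def)
  also have "sum h ((\<lambda>(a,b). Nd a b) ` (Tn n \<times> Tn n)) = (\<Sum>(a,b)\<in>Tn n \<times> Tn n. h (Nd a b))"
    by (subst sum.reindex) (auto simp: inj_on_def case_prod_beta)
  finally show ?thesis .
qed

lemma sum_Tn_0:
  fixes h :: "etree \<Rightarrow> real"
  shows "sum h (Tn 0) = (\<Sum>e\<in>UNIV. h (Lf e))"
  by (simp, subst sum.reindex) (auto simp: inj_on_def)

lemma summable_from_Tn:
  fixes h :: "etree \<Rightarrow> real"
  assumes nn: "\<And>t. 0 \<le> h t" and bd: "\<And>n. sum h (Tn n) \<le> K"
  shows "h summable_on UNIV" and "infsum h UNIV \<le> K"
proof -
  have fin: "sum h F \<le> K" if "finite F" for F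
  proof -
    from finite_sub_Tn[OF that] obtain n where "F \<subseteq> Tn n" by blast
    then have "sum h F \<le> sum h (Tn n)" by (intro sum_mono2) (auto simp: finite_Tn nn)
    then show ?thesis using bd[of n] by linarith
  qed
  show s: "h summable_on UNIV"
    by (rule nonneg_bdd_above_summable_on) (use nn fin in \<open>auto intro!: bdd_aboveI2\<close>)
  show "infsum h UNIV \<le> K"
    by (rule infsum_le_finite_sums[OF s]) (use fin in auto)
qed

lemma infsum_etree:
  fixes h :: "etree \<Rightarrow> real"
  assumes s: "h summable_on UNIV"
  shows "infsum h UNIV = (\<Sum>e\<in>UNIV. h (Lf e)) + infsum (\<lambda>(a,b). h (Nd a b)) UNIV"
proof -
  have U: "(UNIV :: etree set) = range Lf \<union> range (\<lambda>(a,b). Nd a b)"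
  proof (intro set_eqI iffI)
    fix t :: etree show "t \<in> range Lf \<union> range (\<lambda>(a,b). Nd a b)"
      by (cases t) (auto simp: image_iff)
  qed auto
  have d: "range Lf \<inter> range (\<lambda>(a,b). Nd a b) = {}" by auto
  have "infsum h UNIV = infsum h (range Lf) + infsum h (range (\<lambda>(a,b). Nd a b))"
    by (subst U, rule infsum_Un_disjoint[OF _ _ d]) (auto intro: summable_on_subset_banach[OF s])
  also have "infsum h (range Lf) = (\<Sum>e\<in>UNIV. h (Lf e))"
    by (simp, subst sum.reindex) (auto simp: inj_on_def)
  also have "infsum h (range (\<lambda>(a,b). Nd a b)) = infsum (h \<circ> (\<lambda>(a,b). Nd a b)) UNIV"
    by (rule infsum_reindex) (auto simp: inj_on_def)
  also have "h \<circ> (\<lambda>(a,b). Nd a b) = (\<lambda>(a,b). h (Nd a b))" by (auto simp: fun_eq_iff)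
  finally show ?thesis .
qed

lemma prod_summable:
  fixes f g :: "'a \<Rightarrow> real"
  assumes f0: "\<And>x. 0 \<le> f x" and g0: "\<And>x. 0 \<le> g x"
    and sf: "f summable_on UNIV" and sg: "g summable_on UNIV"
  shows "(\<lambda>(x,y). f x * g y) summable_on UNIV"
    and "infsum (\<lambda>(x,y). f x * g y) UNIV = infsum f UNIV * infsum g UNIV"
proof -
  have fin: "sum (\<lambda>(x,y). f x * g y) F \<le> infsum f UNIV * infsum g UNIV" if "finite F" for F
  proof -
    have "sum (\<lambda>(x,y). f x * g y) F \<le> sum (\<lambda>(x,y). f x * g y) (fst ` F \<times> snd ` F)"
      by (intro sum_mono2) (auto simp: that f0 g0 subset_fst_snd intro!: mult_nonneg_nonneg)
    also have "\<dots> = sum f (fst ` F) * sum g (snd ` F)" by (rule sum_prod_split)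
    also have "\<dots> \<le> infsum f UNIV * infsum g UNIV"
      by (intro mult_mono finite_sum_le_infsum sf sg infsum_nonneg)
         (auto simp: that f0 g0 intro: sum_nonneg)
    finally show ?thesis .
  qed
  show s: "(\<lambda>(x,y). f x * g y) summable_on UNIV"
    by (rule nonneg_bdd_above_summable_on)
       (use fin f0 g0 in \<open>auto intro!: bdd_aboveI2 mult_nonneg_nonneg\<close>)
  have s': "(\<lambda>(x,y). f x * g y) summable_on (UNIV \<times> UNIV)" using s by simp
  have "infsum (\<lambda>(x,y). f x * g y) UNIV = infsum (\<lambda>(x,y). f x * g y) (UNIV \<times> UNIV)" by simp
  also have "\<dots> = infsum (\<lambda>x. infsum (\<lambda>y. f x * g y) UNIV) UNIV"
    by (rule infsum_Sigma'_banach[OF s', symmetric])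
  also have "\<dots> = infsum (\<lambda>x. f x * infsum g UNIV) UNIV"
    by (simp add: infsum_cmult_right')
  also have "\<dots> = infsum f UNIV * infsum g UNIV"
    by (simp add: infsum_cmult_left')
  finally show "infsum (\<lambda>(x,y). f x * g y) UNIV = infsum f UNIV * infsum g UNIV" .
qed

context
  fixes p q \<gamma> :: real and n1 :: nat
  assumes q0: "0 < q" and qp: "q < p" and pq1: "p + q = 1"
    and g0: "0 \<le> \<gamma>" and g1: "\<gamma> \<le> 1"
begin

lemma lw_nonneg: "0 \<le> lw p \<gamma> e"
  using q0 qp g0 g1 by (cases e) (auto simp: lw_def)

lemma wt_nonneg: "0 \<le> wt p q \<gamma> fl t"
  by (induction t arbitrary: fl) (use q0 qp lw_nonneg in auto)

lemma sum_lw: "(\<Sum>e\<in>UNIV. lw p \<gamma> e) = p"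
  by (simp add: UNIV_event lw_def algebra_simps)

lemma leaf_le: "(\<Sum>e\<in>UNIV. wt p q \<gamma> fl (Lf e)) \<le> p"
  using sum_lw q0 qp by (cases fl) (auto simp: UNIV_event)

lemma sum_wt_le1: "sum (wt p q \<gamma> fl) (Tn n) \<le> 1"
proof (induction n arbitrary: fl)
  case 0
  have "sum (wt p q \<gamma> fl) (Tn 0) = (\<Sum>e\<in>UNIV. wt p q \<gamma> fl (Lf e))" by (rule sum_Tn_0)
  also have "\<dots> \<le> p" by (rule leaf_le)
  finally show ?case using pq1 q0 by simp
next
  case (Suc n)
  have "(\<Sum>(a,b)\<in>Tn n \<times> Tn n. wt p q \<gamma> fl (Nd a b))
      = q * (sum (wt p q \<gamma> fl) (Tn n) * sum (wt p q \<gamma> False) (Tn n))"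
    using sum_prod_split[of "\<lambda>a. q * wt p q \<gamma> fl a" "wt p q \<gamma> False" "Tn n" "Tn n"]
    by (simp add: sum_distrib_left[symmetric] mult.assoc)
  also have "\<dots> \<le> q * (1 * 1)"
    using Suc.IH q0 by (intro mult_left_mono mult_mono) (auto intro: sum_nonneg wt_nonneg)
  finally show ?case using leaf_le[of fl] pq1 by (simp only: sum_Tn_Suc)
qed

lemma st_leaf_le: "st n1 fl L (Lf e) \<le> n1"
  by simp

lemma st_zero: "n1 < L \<Longrightarrow> st n1 fl L t = 0"
  by (induction t arbitrary: fl L) auto

lemma node_sum_split:
  fixes X :: "(etree \<times> etree) set"
  shows "(\<Sum>(a,b)\<in>X. wt p q \<gamma> fl (Nd a b) * real (st n1 fl L (Nd a b)))
     = (\<Sum>(a,b)\<in>X. (q * (wt p q \<gamma> fl a * real (st n1 fl (Suc L) a))) * wt p q \<gamma> False b)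
     + (\<Sum>(a,b)\<in>X. (q * wt p q \<gamma> fl a) * (wt p q \<gamma> False b * real (st n1 False L b)))"
  by (subst sum.distrib[symmetric]) (auto intro!: sum.cong simp: algebra_simps)

lemma sum_st_le: "sum (\<lambda>t. wt p q \<gamma> fl t * real (st n1 fl L t)) (Tn n) \<le> p * n1 / (p - q)"
proof (induction n arbitrary: fl L)
  define K where "K = p * n1 / (p - q)"
  have K1: "K * (p - q) = p * n1" using qp by (simp add: K_def field_simps)
  have pqK: "p * n1 + 2 * q * K = K"
  proof -
    have "p * n1 + 2 * q * K = K * (p + q)" using K1 by (simp add: algebra_simps)
    then show ?thesis using pq1 by simp
  qed
  have Kpos: "0 \<le> K" using qp q0 by (simp add: K_def)
  have leaf: "(\<Sum>e\<in>UNIV. wt p q \<gamma> fl (Lf e) * real (st n1 fl L (Lf e))) \<le> p * n1" for fl L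
  proof -
    have "(\<Sum>e\<in>UNIV. wt p q \<gamma> fl (Lf e) * real (st n1 fl L (Lf e)))
        \<le> (\<Sum>e\<in>UNIV. wt p q \<gamma> fl (Lf e) * n1)"
      by (intro sum_mono mult_left_mono) (auto simp: wt_nonneg simp del: wt.simps)
    also have "\<dots> = (\<Sum>e\<in>UNIV. wt p q \<gamma> fl (Lf e)) * n1" by (simp add: sum_distrib_right)
    also have "\<dots> \<le> p * n1" by (intro mult_right_mono leaf_le) auto
    finally show ?thesis .
  qed
  {
    case 0
    have "0 \<le> q * K" using Kpos q0 by simp
    then show ?case using leaf[of fl L] pqK
      by (simp only: sum_Tn_0 K_def[symmetric]; linarith)
  next
    case (Suc n)
    have "(\<Sum>(a,b)\<in>Tn n \<times> Tn n. wt p q \<gamma> fl (Nd a b) * real (st n1 fl L (Nd a b)))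
       = q * (sum (\<lambda>a. wt p q \<gamma> fl a * real (st n1 fl (Suc L) a)) (Tn n) * sum (wt p q \<gamma> False) (Tn n))
       + q * (sum (wt p q \<gamma> fl) (Tn n) * sum (\<lambda>b. wt p q \<gamma> False b * real (st n1 False L b)) (Tn n))"
      unfolding node_sum_split sum_prod_split sum_distrib_left[symmetric] by (simp add: mult.assoc)
    also have "\<dots> \<le> q * (K * 1) + q * (1 * K)"
      using Suc.IH q0 sum_wt_le1 Kpos
      by (intro add_mono mult_left_mono mult_mono) (auto simp: K_def intro!: sum_nonneg mult_nonneg_nonneg wt_nonneg)
    finally show ?case using leaf[of fl L] pqK
      by (simp only: sum_Tn_Suc K_def[symmetric]; linarith)
  }
qed

lemma summ_wt: "wt p q \<gamma> fl summable_on UNIV" and M_le1: "infsum (wt p q \<gamma> fl) UNIV \<le> 1"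
  using summable_from_Tn[of "wt p q \<gamma> fl" 1] wt_nonneg sum_wt_le1 by auto

lemma summ_G: "(\<lambda>t. wt p q \<gamma> fl t * real (st n1 fl L t)) summable_on UNIV"
  using summable_from_Tn[of "\<lambda>t. wt p q \<gamma> fl t * real (st n1 fl L t)" "p * n1 / (p - q)"] wt_nonneg sum_st_le by auto

lemma prod_q:
  fixes f g :: "etree \<Rightarrow> real"
  assumes f0: "\<And>x. 0 \<le> f x" and g0: "\<And>x. 0 \<le> g x"
    and sf: "f summable_on UNIV" and sg: "g summable_on UNIV"
  shows "(\<lambda>(x,y). (q * f x) * g y) summable_on UNIV"
    and "infsum (\<lambda>(x,y). (q * f x) * g y) UNIV = q * (infsum f UNIV * infsum g UNIV)"
proof -
  have f0': "\<And>x. 0 \<le> q * f x" using f0 q0 by simp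
  have sf': "(\<lambda>x. q * f x) summable_on UNIV" using sf by (rule summable_on_cmult_right)
  show "(\<lambda>(x,y). (q * f x) * g y) summable_on UNIV"
    using prod_summable(1)[OF f0' g0 sf' sg] .
  show "infsum (\<lambda>(x,y). (q * f x) * g y) UNIV = q * (infsum f UNIV * infsum g UNIV)"
    using prod_summable(2)[OF f0' g0 sf' sg] by (simp add: infsum_cmult_right')
qed

lemma M_rec: "infsum (wt p q \<gamma> fl) UNIV
   = (\<Sum>e\<in>UNIV. wt p q \<gamma> fl (Lf e)) + q * (infsum (wt p q \<gamma> fl) UNIV * infsum (wt p q \<gamma> False) UNIV)"
proof -
  have "infsum (\<lambda>(a,b). wt p q \<gamma> fl (Nd a b)) UNIV = infsum (\<lambda>(a,b). (q * wt p q \<gamma> fl a) * wt p q \<gamma> False b) UNIV"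
    by (simp add: case_prod_beta)
  also have "\<dots> = q * (infsum (wt p q \<gamma> fl) UNIV * infsum (wt p q \<gamma> False) UNIV)"
    by (rule prod_q(2)) (auto intro: wt_nonneg summ_wt)
  finally show ?thesis using infsum_etree[OF summ_wt[of fl]] by simp
qed

lemma G_rec: "infsum (\<lambda>t. wt p q \<gamma> fl t * real (st n1 fl L t)) UNIV
   = (\<Sum>e\<in>UNIV. wt p q \<gamma> fl (Lf e) * real (st n1 fl L (Lf e)))
     + q * (infsum (\<lambda>t. wt p q \<gamma> fl t * real (st n1 fl (Suc L) t)) UNIV * infsum (wt p q \<gamma> False) UNIV)
     + q * (infsum (wt p q \<gamma> fl) UNIV * infsum (\<lambda>t. wt p q \<gamma> False t * real (st n1 False L t)) UNIV)"
proof -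
  let ?F1 = "\<lambda>(a,b). (q * (wt p q \<gamma> fl a * real (st n1 fl (Suc L) a))) * wt p q \<gamma> False b"
  let ?F2 = "\<lambda>(a,b). (q * wt p q \<gamma> fl a) * (wt p q \<gamma> False b * real (st n1 False L b))"
  have h1: "\<And>x. 0 \<le> wt p q \<gamma> fl x * real (st n1 fl (Suc L) x)" by (simp add: wt_nonneg)
  have h2: "\<And>x. 0 \<le> wt p q \<gamma> False x * real (st n1 False L x)" by (simp add: wt_nonneg)
  note P1 = prod_q[OF h1 wt_nonneg summ_G summ_wt]
  note P2 = prod_q[OF wt_nonneg h2 summ_wt summ_G]
  have s1: "?F1 summable_on UNIV" by (rule P1(1))
  have e1: "infsum ?F1 UNIV = q * (infsum (\<lambda>t. wt p q \<gamma> fl t * real (st n1 fl (Suc L) t)) UNIV * infsum (wt p q \<gamma> False) UNIV)"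
    by (rule P1(2))
  have s2: "?F2 summable_on UNIV" by (rule P2(1))
  have e2: "infsum ?F2 UNIV = q * (infsum (wt p q \<gamma> fl) UNIV * infsum (\<lambda>t. wt p q \<gamma> False t * real (st n1 False L t)) UNIV)"
    by (rule P2(2))
  have "infsum (\<lambda>(a,b). wt p q \<gamma> fl (Nd a b) * real (st n1 fl L (Nd a b))) UNIV = infsum (\<lambda>x. ?F1 x + ?F2 x) UNIV"
    by (rule infsum_cong) (auto simp: algebra_simps)
  also have "\<dots> = infsum ?F1 UNIV + infsum ?F2 UNIV" by (rule infsum_add[OF s1 s2])
  finally show ?thesis using infsum_etree[OF summ_G[of fl L]] e1 e2 by simp
qed

lemma leafsum_wt: "(\<Sum>e\<in>UNIV. wt p q \<gamma> fl (Lf e)) = p"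
  by (cases fl) (auto simp: UNIV_event lw_def algebra_simps)

lemma leafsum_G: "(\<Sum>e\<in>UNIV. wt p q \<gamma> fl (Lf e) * real (st n1 fl L (Lf e)))
   = (if fl then p else p * \<gamma>) * (if L \<le> n1 then real L else 0)"
  by (cases fl) (auto simp: UNIV_event lw_def algebra_simps)

lemma M_False: "infsum (wt p q \<gamma> False) UNIV = 1"
proof -
  define M where "M = infsum (wt p q \<gamma> False) UNIV"
  have e: "M = p + q * (M * M)" using M_rec[of False] leafsum_wt[of False] by (simp add: M_def)
  have le: "M \<le> 1" using M_le1 by (simp add: M_def)
  have "(M - 1) * (q * M - p) = 0"
  proof -
    have "(M - 1) * (q * M - p) = q * (M * M) - (p + q) * M + p" by (simp add: algebra_simps)
    also have "\<dots> = 0" using e pq1 by simp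
    finally show ?thesis .
  qed
  moreover have "q * M \<le> q" using le q0 by (intro mult_left_le) auto
  then have "q * M - p < 0" using qp by simp
  ultimately show ?thesis by (simp add: M_def)
qed

lemma M_True: "infsum (wt p q \<gamma> True) UNIV = 1"
proof -
  define M where "M = infsum (wt p q \<gamma> True) UNIV"
  have e: "M = p + q * M" using M_rec[of True] leafsum_wt[of True] M_False by (simp add: M_def)
  then have "M * (1 - q) = p" by (simp add: algebra_simps)
  moreover have "1 - q = p" using pq1 by simp
  ultimately have "M * p = p * 1" by simp
  then show ?thesis using qp q0 by (simp add: M_def)
qed

lemma G0_rec: "p * infsum (\<lambda>t. wt p q \<gamma> False t * real (st n1 False L t)) UNIV
   = p * \<gamma> * (if L \<le> n1 then real L else 0) + q * infsum (\<lambda>t. wt p q \<gamma> False t * real (st n1 False (Suc L) t)) UNIV"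
proof -
  have "infsum (\<lambda>t. wt p q \<gamma> False t * real (st n1 False L t)) UNIV
     = p * \<gamma> * (if L \<le> n1 then real L else 0) + q * infsum (\<lambda>t. wt p q \<gamma> False t * real (st n1 False (Suc L) t)) UNIV
       + q * infsum (\<lambda>t. wt p q \<gamma> False t * real (st n1 False L t)) UNIV"
    using G_rec[of False L] leafsum_G[of False L] M_False by simp
  then have "infsum (\<lambda>t. wt p q \<gamma> False t * real (st n1 False L t)) UNIV * (1 - q)
     = p * \<gamma> * (if L \<le> n1 then real L else 0) + q * infsum (\<lambda>t. wt p q \<gamma> False t * real (st n1 False (Suc L) t)) UNIV"
    by (simp add: algebra_simps)
  moreover have "1 - q = p" using pq1 by simp
  ultimately show ?thesis by (simp add: mult.commute)
qed

lemma G1_rec: "infsum (\<lambda>t. wt p q \<gamma> True t * real (st n1 True L t)) UNIV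
   = p * (if L \<le> n1 then real L else 0) + q * infsum (\<lambda>t. wt p q \<gamma> True t * real (st n1 True (Suc L) t)) UNIV
     + q * infsum (\<lambda>t. wt p q \<gamma> False t * real (st n1 False L t)) UNIV"
  using G_rec[of True L] leafsum_G[of True L] M_False M_True by simp

lemma sum_first: "L \<le> n \<Longrightarrow> (\<Sum>k=L..n. h k (k - L)) = h L 0 + (\<Sum>k=Suc L..n. h k (Suc (k - Suc L)))"
  by (subst sum.atLeast_Suc_atMost) (auto intro!: sum.cong simp: Suc_diff_Suc)

lemma G0_closed: "infsum (\<lambda>t. wt p q \<gamma> False t * real (st n1 False L t)) UNIV
   = \<gamma> * (\<Sum>k=L..n1. real k * (q / p) ^ (k - L))"
proof -
  have "\<forall>L. n1 < L + d \<longrightarrow> infsum (\<lambda>t. wt p q \<gamma> False t * real (st n1 False L t)) UNIV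
     = \<gamma> * (\<Sum>k=L..n1. real k * (q / p) ^ (k - L))" for d
  proof (induction d)
    case 0
    show ?case
    proof (intro allI impI)
      fix L assume "n1 < L + 0"
      then show "infsum (\<lambda>t. wt p q \<gamma> False t * real (st n1 False L t)) UNIV
     = \<gamma> * (\<Sum>k=L..n1. real k * (q / p) ^ (k - L))" by (simp add: st_zero)
    qed
  next
    case (Suc d)
    show ?case
    proof (intro allI impI)
      fix L assume L: "n1 < L + Suc d"
      show "infsum (\<lambda>t. wt p q \<gamma> False t * real (st n1 False L t)) UNIV
     = \<gamma> * (\<Sum>k=L..n1. real k * (q / p) ^ (k - L))"
      proof (cases "n1 < L")
        case True then show ?thesis by (simp add: st_zero)
      next
        case False
        define r where "r = q / p"
        have pr: "p * r = q" using qp q0 by (simp add: r_def)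
        define S1 where "S1 = (\<Sum>k=Suc L..n1. real k * r ^ (k - Suc L))"
        have IH: "infsum (\<lambda>t. wt p q \<gamma> False t * real (st n1 False (Suc L) t)) UNIV = \<gamma> * S1"
          using Suc.IH L by (simp add: S1_def r_def)
        have split: "(\<Sum>k=L..n1. real k * r ^ (k - L)) = real L + r * S1"
        proof -
          have "(\<Sum>k=Suc L..n1. real k * r ^ Suc (k - Suc L)) = r * S1"
            unfolding S1_def sum_distrib_left by (rule sum.cong) (simp_all add: mult_ac)
          then show ?thesis
            using False sum_first[of L n1 "\<lambda>k j. real k * r ^ j"] by simp
        qed
        have "p * infsum (\<lambda>t. wt p q \<gamma> False t * real (st n1 False L t)) UNIV
           = p * (\<gamma> * (real L + r * S1))"
        proof -
          have "p * infsum (\<lambda>t. wt p q \<gamma> False t * real (st n1 False L t)) UNIV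
             = p * \<gamma> * real L + q * (\<gamma> * S1)" using G0_rec[of L] False IH by simp
          also have "\<dots> = p * (\<gamma> * (real L + r * S1))"
            unfolding pr[symmetric] by (simp add: algebra_simps)
          finally show ?thesis .
        qed
        then have "infsum (\<lambda>t. wt p q \<gamma> False t * real (st n1 False L t)) UNIV = \<gamma> * (real L + r * S1)"
          using qp q0 by simp
        then show ?thesis using split by (simp add: r_def)
      qed
    qed
  qed
  from this[of "Suc n1"] show ?thesis by simp
qed

lemma G1_closed: "infsum (\<lambda>t. wt p q \<gamma> True t * real (st n1 True L t)) UNIV
   = (\<Sum>k=L..n1. real k * (p * (1 - \<gamma>) * q ^ (k - L) + \<gamma> * (q / p) ^ (k - L)))"
proof -
  define r where "r = q / p"
  have pr: "p * r = q" using qp q0 by (simp add: r_def)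
  have rq: "r = q + q * r"
  proof -
    have "r * (p + q) = q + q * r" using pr by (simp add: algebra_simps)
    then show ?thesis using pq1 by simp
  qed
  have "\<forall>L. n1 < L + d \<longrightarrow> infsum (\<lambda>t. wt p q \<gamma> True t * real (st n1 True L t)) UNIV
     = (\<Sum>k=L..n1. real k * (p * (1 - \<gamma>) * q ^ (k - L) + \<gamma> * r ^ (k - L)))" for d
  proof (induction d)
    case 0
    show ?case
    proof (intro allI impI)
      fix L assume "n1 < L + 0"
      then show "infsum (\<lambda>t. wt p q \<gamma> True t * real (st n1 True L t)) UNIV
     = (\<Sum>k=L..n1. real k * (p * (1 - \<gamma>) * q ^ (k - L) + \<gamma> * r ^ (k - L)))" by (simp add: st_zero)
    qed
  next
    case (Suc d)
    show ?case
    proof (intro allI impI)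
      fix L assume L: "n1 < L + Suc d"
      show "infsum (\<lambda>t. wt p q \<gamma> True t * real (st n1 True L t)) UNIV
     = (\<Sum>k=L..n1. real k * (p * (1 - \<gamma>) * q ^ (k - L) + \<gamma> * r ^ (k - L)))"
      proof (cases "n1 < L")
        case True then show ?thesis by (simp add: st_zero)
      next
        case False
        define S1 where "S1 = (\<Sum>k=Suc L..n1. real k * r ^ (k - Suc L))"
        define T1 where "T1 = (\<Sum>k=Suc L..n1. real k * (p * (1 - \<gamma>) * q ^ (k - Suc L) + \<gamma> * r ^ (k - Suc L)))"
        have IH: "infsum (\<lambda>t. wt p q \<gamma> True t * real (st n1 True (Suc L) t)) UNIV = T1"
          using Suc.IH L by (simp add: T1_def)
        have G0: "infsum (\<lambda>t. wt p q \<gamma> False t * real (st n1 False L t)) UNIV = \<gamma> * (real L + r * S1)"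
        proof -
          have "(\<Sum>k=Suc L..n1. real k * r ^ Suc (k - Suc L)) = r * S1"
            unfolding S1_def sum_distrib_left by (rule sum.cong) (simp_all add: mult_ac)
          then show ?thesis
            using False sum_first[of L n1 "\<lambda>k j. real k * r ^ j"] G0_closed[of L] by (simp add: r_def)
        qed
        have trm: "real k * (p * (1 - \<gamma>) * q ^ Suc j + \<gamma> * r ^ Suc j)
            = q * (real k * (p * (1 - \<gamma>) * q ^ j + \<gamma> * r ^ j)) + q * \<gamma> * r * (real k * r ^ j)" for k j
        proof -
          have e: "\<gamma> * r ^ j * real k * r = \<gamma> * r ^ j * real k * (q + q * r)"
            using arg_cong[OF rq, of "\<lambda>x. \<gamma> * r ^ j * real k * x"] .
          show ?thesis using e by (simp add: algebra_simps)
        qed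
        have tail: "(\<Sum>k=Suc L..n1. real k * (p * (1 - \<gamma>) * q ^ Suc (k - Suc L) + \<gamma> * r ^ Suc (k - Suc L)))
            = q * T1 + q * \<gamma> * r * S1"
          unfolding T1_def S1_def sum_distrib_left sum.distrib[symmetric] by (rule sum.cong[OF refl trm])
        have "infsum (\<lambda>t. wt p q \<gamma> True t * real (st n1 True L t)) UNIV
            = p * real L + q * T1 + q * (\<gamma> * (real L + r * S1))"
          using G1_rec[of L] False IH G0 by simp
        also have "\<dots> = real L * (p * (1 - \<gamma>) + \<gamma>) + (q * T1 + q * \<gamma> * r * S1)"
        proof -
          have "p * real L + q * \<gamma> * real L = real L * (p * (1 - \<gamma>) + \<gamma> * (p + q))"
            by (simp add: algebra_simps)
          then show ?thesis using pq1 by (simp add: algebra_simps)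
        qed
        also have "\<dots> = (\<Sum>k=L..n1. real k * (p * (1 - \<gamma>) * q ^ (k - L) + \<gamma> * r ^ (k - L)))"
          using False sum_first[of L n1 "\<lambda>k j. real k * (p * (1 - \<gamma>) * q ^ j + \<gamma> * r ^ j)"] tail
          by simp
        finally show ?thesis .
      qed
    qed
  qed
  from this[of "Suc n1"] show ?thesis by (simp add: r_def)
qed

end

lemma Ssum: "(1 - x)^2 * (\<Sum>k=2..Suc m. real k * x^(k-2)) = 2 - x - (real m + 2) * x^m + (real m + 1) * x^(Suc m)"
  for x :: real
proof (induction m)
  case 0 then show ?case by simp
next
  case (Suc m)
  have "(\<Sum>k=2..Suc (Suc m). real k * x^(k-2)) = (\<Sum>k=2..Suc m. real k * x^(k-2)) + (real m + 2) * x^m"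
    by (simp add: sum.cl_ivl_Suc)
  then have "(1 - x)^2 * (\<Sum>k=2..Suc (Suc m). real k * x^(k-2))
     = (2 - x - (real m + 2) * x^m + (real m + 1) * x^(Suc m)) + (1 - x)^2 * ((real m + 2) * x^m)"
    using Suc.IH by (simp add: distrib_left)
  also have "\<dots> = 2 - x - (real (Suc m) + 2) * x^(Suc m) + (real (Suc m) + 1) * x^(Suc (Suc m))"
    by (simp add: power2_eq_square algebra_simps)
  finally show ?case .
qed

lemma alg:
  fixes p q \<gamma> A B x y M :: real
  assumes p0: "0 < p" and q0: "0 < q" and pq1: "p + q = 1" and qp: "q < p"
    and EA: "p^2 * A = 2 - q - (M+2)*x + (M+1)*(q*x)"
    and EB: "((p-q)/p)^2 * B = 2 - q/p - (M+2)*y + (M+1)*((q/p)*y)"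
  shows "q^2*(p*(1-\<gamma>)*A + \<gamma>*B) = (p*q^2*\<gamma>/(p-q)^2)*(2*p - q - (p + (M+1)*(p-q))*y)
          + ((1-\<gamma>)*q/p)*(q*(1+p) - (1+(M+1)*p)*(q*x))"
proof -
  have pq: "p - q \<noteq> 0" using qp by simp
  have i: "q^2 * p * A = (q/p)*(q*(1+p) - (1+(M+1)*p)*(q*x))"
  proof -
    have "q^2 * p * A * p = q^2 * (p^2 * A)" by (simp add: power2_eq_square)
    also have "\<dots> = q^2 * (2 - q - (M+2)*x + (M+1)*(q*x))" using EA by simp
    also have "\<dots> = q*(q*(1+p) - (1+(M+1)*p)*(q*x))"
    proof -
      have p: "p = 1 - q" using pq1 by simp
      show ?thesis unfolding p by (simp add: algebra_simps power2_eq_square)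
    qed
    also have "\<dots> = (q/p)*(q*(1+p) - (1+(M+1)*p)*(q*x)) * p" using p0 by simp
    finally show ?thesis using p0 by (subst (asm) mult_right_cancel) auto
  qed
  have ii: "q^2 * B = (p*q^2/(p-q)^2)*(2*p - q - (p + (M+1)*(p-q))*y)"
  proof -
    have "(p-q)^2 * B = p^2 * (2 - q/p - (M+2)*y + (M+1)*((q/p)*y))"
      using EB p0 by (simp add: field_simps)
    also have "\<dots> = p * (2*p - q - (p + (M+1)*(p-q))*y)"
      using p0 by (simp add: field_simps power2_eq_square)
    finally have "(p-q)^2 * B = p * (2*p - q - (p + (M+1)*(p-q))*y)" .
    then have "B = p * (2*p - q - (p + (M+1)*(p-q))*y) / (p-q)^2" using pq by (simp add: field_simps)
    then show ?thesis by simp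
  qed
  have "q^2*(p*(1-\<gamma>)*A + \<gamma>*B) = (1-\<gamma>) * (q^2 * p * A) + \<gamma> * (q^2 * B)" by (simp add: algebra_simps)
  also have "\<dots> = (1-\<gamma>) * ((q/p)*(q*(1+p) - (1+(M+1)*p)*(q*x))) + \<gamma> * ((p*q^2/(p-q)^2)*(2*p - q - (p + (M+1)*(p-q))*y))"
    unfolding i ii ..
  also have "\<dots> = (p*q^2*\<gamma>/(p-q)^2)*(2*p - q - (p + (M+1)*(p-q))*y)
          + ((1-\<gamma>)*q/p)*(q*(1+p) - (1+(M+1)*p)*(q*x))" using p0 pq by (simp add: field_simps)
  finally show ?thesis .
qed

definition cA :: "event list \<Rightarrow> nat \<Rightarrow> nat" where
  "cA xs k = length (filter (\<lambda>e. e = Att) (take k xs))"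
definition cH :: "event list \<Rightarrow> nat \<Rightarrow> nat" where
  "cH xs k = length (filter (\<lambda>e. e \<noteq> Att) (take k xs))"

lemma cA_snoc: "k \<le> length xs \<Longrightarrow> cA (xs @ [x]) k = cA xs k"
  by (simp add: cA_def)
lemma cH_snoc: "k \<le> length xs \<Longrightarrow> cH (xs @ [x]) k = cH xs k"
  by (simp add: cH_def)
lemma cA_Suc: "i < length xs \<Longrightarrow> cA xs (Suc i) = cA xs i + (if xs ! i = Att then 1 else 0)"
  by (simp add: cA_def take_Suc_conv_app_nth)
lemma cH_Suc: "i < length xs \<Longrightarrow> cH xs (Suc i) = cH xs i + (if xs ! i = Att then 0 else 1)"
  by (simp add: cH_def take_Suc_conv_app_nth)
lemma cA_0[simp]: "cA xs 0 = 0" by (simp add: cA_def)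
lemma cH_0[simp]: "cH xs 0 = 0" by (simp add: cH_def)

lemma cA_mono: "k \<le> j \<Longrightarrow> cA xs k \<le> cA xs j"
proof -
  assume "k \<le> j"
  then obtain d where "j = k + d" using le_Suc_ex by blast
  then show ?thesis by (simp add: cA_def take_add)
qed

lemma cA_const: "k \<le> j \<Longrightarrow> j \<le> length xs \<Longrightarrow> (\<forall>m. k \<le> m \<and> m < j \<longrightarrow> xs ! m \<noteq> Att) \<Longrightarrow> cA xs j = cA xs k"
proof (induction j)
  case 0 then show ?case by simp
next
  case (Suc j)
  show ?case
  proof (cases "k = Suc j")
    case True then show ?thesis by simp
  next
    case False
    then have "k \<le> j" using Suc.prems by simp
    then show ?thesis using Suc by (simp add: cA_Suc)
  qed
qed

lemma cA_le_len: "cA xs k \<le> length xs" unfolding cA_def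
  by (metis length_filter_le length_take min.bounded_iff order_trans nle_le)

lemma cA_ivt: "1 \<le> h \<Longrightarrow> h \<le> cA xs k \<Longrightarrow> k \<le> length xs \<Longrightarrow> \<exists>i<k. xs ! i = Att \<and> cA xs (Suc i) = h"
proof (induction k)
  case 0 then show ?case by simp
next
  case (Suc k)
  show ?case
  proof (cases "h \<le> cA xs k")
    case True
    then obtain i where "i < k" "xs ! i = Att \<and> cA xs (Suc i) = h" using Suc by auto
    then show ?thesis using less_SucI by blast
  next
    case False
    then have "xs ! k = Att" "cA xs (Suc k) = h" using Suc.prems cA_Suc[of k xs] by (auto split: if_splits)
    then show ?thesis by blast
  qed
qed

lemma cA_cH: "k \<le> length xs \<Longrightarrow> cA xs k + cH xs k = k"
proof (induction k)
  case 0 then show ?case by simp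
next
  case (Suc k) then show ?case by (simp add: cA_Suc cH_Suc)
qed

lemma last_idx_Nil[simp]: "last_idx P [] = None"
  by (simp add: last_idx_def)

lemma last_idx_snoc: "last_idx P (bs @ [b]) = (if P b then Some (length bs) else last_idx P bs)"
proof -
  have e: "filter (\<lambda>j. P ((bs @ [b]) ! j)) [0..<length bs] = filter (\<lambda>j. P (bs ! j)) [0..<length bs]"
    by (rule filter_cong) (auto simp: nth_append)
  show ?thesis unfolding last_idx_def by (simp add: e Let_def)
qed

lemma last_idx_None: "last_idx P bs = None \<longleftrightarrow> (\<forall>j<length bs. \<not> P (bs ! j))"
proof (induction bs rule: rev_induct)
  case Nil then show ?case by simp
next
  case (snoc b bs) then show ?case
    by (auto simp: last_idx_snoc nth_append less_Suc_eq)
qed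

lemma last_idx_Some: "last_idx P bs = Some k \<Longrightarrow> k < length bs \<and> P (bs ! k) \<and> (\<forall>m. k < m \<and> m < length bs \<longrightarrow> \<not> P (bs ! m))"
proof (induction bs rule: rev_induct)
  case Nil then show ?case by simp
next
  case (snoc b bs) then show ?case
    by (auto simp: last_idx_snoc nth_append less_Suc_eq split: if_splits)
qed

lemma build_snoc: "build bs (xs @ [x]) = build bs xs @ [new_block (build bs xs) x]"
  by (induction xs arbitrary: bs) auto

lemma blocks_snoc: "blocks (xs @ [x]) = blocks xs @ [new_block (blocks xs) x]"
  by (simp add: blocks_def build_snoc)

lemma length_build: "length (build bs xs) = length bs + length xs"
  by (induction xs arbitrary: bs) auto

lemma length_blocks[simp]: "length (blocks xs) = length xs"
  by (simp add: blocks_def length_build)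

lemma cH_const: "k \<le> j \<Longrightarrow> j \<le> length xs \<Longrightarrow> (\<forall>m. k \<le> m \<and> m < j \<longrightarrow> xs ! m = Att) \<Longrightarrow> cH xs j = cH xs k"
proof (induction j)
  case 0 then show ?case by simp
next
  case (Suc j)
  show ?case
  proof (cases "k = Suc j")
    case True then show ?thesis by simp
  next
    case False
    then have "k \<le> j" using Suc.prems by simp
    then show ?thesis using Suc by (simp add: cH_Suc)
  qed
qed

definition good :: "event list \<Rightarrow> bool" where
  "good xs \<longleftrightarrow> (\<forall>j<length xs. xs ! j \<noteq> Att \<longrightarrow> cH xs j \<le> cA xs j)"

definition binv :: "event list \<Rightarrow> nat \<Rightarrow> block \<Rightarrow> bool" where
  "binv xs i b \<longleftrightarrow> fst b = xs ! i \<and>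
     fst (snd b) = (if xs ! i = Att then cA xs (Suc i) else cH xs (Suc i)) \<and>
     (xs ! i = Att \<longrightarrow> (case snd (snd b) of None \<Rightarrow> cA xs i = 0
        | Some k \<Rightarrow> k < i \<and> xs ! k = Att \<and> (\<forall>m. k < m \<and> m < i \<longrightarrow> xs ! m \<noteq> Att))) \<and>
     (xs ! i = HonH \<longrightarrow> (case snd (snd b) of None \<Rightarrow> cH xs i = 0 | Some k \<Rightarrow> k < i \<and> xs ! k \<noteq> Att)) \<and>
     (xs ! i = HonA \<longrightarrow> (case snd (snd b) of None \<Rightarrow> cH xs i = 0 | Some k \<Rightarrow> k < i \<and> xs ! k = Att))"

definition blinv :: "event list \<Rightarrow> bool" where
  "blinv xs \<longleftrightarrow> (\<forall>i<length xs. binv xs i (blocks xs ! i))"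

lemma binv_snoc: "i < length xs \<Longrightarrow> binv (xs @ [x]) i b = binv xs i b"
proof -
  assume i: "i < length xs"
  have a: "(xs @ [x]) ! m = xs ! m" if "m \<le> i" for m using that i by (simp add: nth_append)
  show ?thesis unfolding binv_def using i
    by (cases "snd (snd b)") (auto simp: nth_append cA_snoc cH_snoc)
qed

lemma inv_fst: "blinv xs \<Longrightarrow> i < length xs \<Longrightarrow> fst (blocks xs ! i) = xs ! i"
  by (simp add: blinv_def binv_def)
lemma inv_ht: "blinv xs \<Longrightarrow> i < length xs \<Longrightarrow> fst (snd (blocks xs ! i)) = (if xs ! i = Att then cA xs (Suc i) else cH xs (Suc i))"
  by (simp add: blinv_def binv_def)

lemma atk_tip_prop:
  assumes "blinv xs"
  shows "(atk_tip (blocks xs) = None \<and> cA xs (length xs) = 0) \<or>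
    (\<exists>k. atk_tip (blocks xs) = Some k \<and> k < length xs \<and> xs ! k = Att \<and>
       (\<forall>m. k < m \<and> m < length xs \<longrightarrow> xs ! m \<noteq> Att) \<and> hgt (blocks xs) (Some k) = cA xs (length xs))"
proof (cases "atk_tip (blocks xs)")
  case None
  then have "\<forall>j<length xs. xs ! j \<noteq> Att"
    using assms by (auto simp: atk_tip_def last_idx_None blinv_def binv_def)
  then have "cA xs (length xs) = cA xs 0" by (intro cA_const) auto
  then show ?thesis using None by simp
next
  case (Some k)
  then have "k < length xs \<and> fst (blocks xs ! k) = Att \<and> (\<forall>m. k < m \<and> m < length xs \<longrightarrow> fst (blocks xs ! m) \<noteq> Att)"
    using last_idx_Some[of "\<lambda>b. fst b = Att" "blocks xs" k] by (simp add: atk_tip_def)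
  then have k: "k < length xs" "xs ! k = Att" "\<forall>m. k < m \<and> m < length xs \<longrightarrow> xs ! m \<noteq> Att"
    using inv_fst[OF assms] by auto
  have "cA xs (length xs) = cA xs (Suc k)" using k by (intro cA_const) auto
  moreover have "hgt (blocks xs) (Some k) = cA xs (Suc k)"
    using inv_ht[OF assms k(1)] k by (simp add: hgt_def)
  ultimately show ?thesis using Some k by auto
qed

lemma hon_tip_prop:
  assumes "blinv xs"
  shows "(hon_tip (blocks xs) = None \<and> cH xs (length xs) = 0) \<or>
    (\<exists>k. hon_tip (blocks xs) = Some k \<and> k < length xs \<and> xs ! k \<noteq> Att \<and>
       hgt (blocks xs) (Some k) = cH xs (length xs))"
proof (cases "hon_tip (blocks xs)")
  case None
  then have "\<forall>j<length xs. xs ! j = Att"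
    using assms by (auto simp: hon_tip_def last_idx_None blinv_def binv_def)
  then have "cH xs (length xs) = cH xs 0" by (intro cH_const) auto
  then show ?thesis using None by simp
next
  case (Some k)
  then have "k < length xs \<and> fst (blocks xs ! k) \<noteq> Att \<and> (\<forall>m. k < m \<and> m < length xs \<longrightarrow> \<not> fst (blocks xs ! m) \<noteq> Att)"
    using last_idx_Some[of "\<lambda>b. fst b \<noteq> Att" "blocks xs" k] by (simp add: hon_tip_def)
  then have k: "k < length xs" "xs ! k \<noteq> Att" "\<forall>m. k < m \<and> m < length xs \<longrightarrow> xs ! m = Att"
    using inv_fst[OF assms] by auto
  have "cH xs (length xs) = cH xs (Suc k)" using k by (intro cH_const) auto
  moreover have "hgt (blocks xs) (Some k) = cH xs (Suc k)"
    using inv_ht[OF assms k(1)] k by (simp add: hgt_def)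
  ultimately show ?thesis using Some k by auto
qed

lemma hgt_None[simp]: "hgt bs None = 0" by (simp add: hgt_def)

lemma new_block_binv:
  assumes I: "blinv xs" and G: "good (xs @ [x])"
  shows "binv (xs @ [x]) (length xs) (new_block (blocks xs) x)"
proof -
  let ?n = "length xs"
  let ?bs = "blocks xs"
  have nx: "(xs @ [x]) ! ?n = x" by simp
  have cA1: "cA (xs @ [x]) (Suc ?n) = cA xs ?n + (if x = Att then 1 else 0)"
    using cA_Suc[of ?n "xs @ [x]"] cA_snoc[of ?n xs x] by simp
  have cH1: "cH (xs @ [x]) (Suc ?n) = cH xs ?n + (if x = Att then 0 else 1)"
    using cH_Suc[of ?n "xs @ [x]"] cH_snoc[of ?n xs x] by simp
  have cA0: "cA (xs @ [x]) ?n = cA xs ?n" by (simp add: cA_snoc)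
  have cH0: "cH (xs @ [x]) ?n = cH xs ?n" by (simp add: cH_snoc)
  have na: "\<And>m. m < ?n \<Longrightarrow> (xs @ [x]) ! m = xs ! m" by (simp add: nth_append)
  have hh: "hgt ?bs (hon_tip ?bs) = cH xs ?n" using hon_tip_prop[OF I] by auto
  show ?thesis
  proof (cases x)
    case Att
    show ?thesis using atk_tip_prop[OF I]
    proof
      assume "atk_tip ?bs = None \<and> cA xs ?n = 0"
      then show ?thesis using Att cA1 cA0 by (simp add: binv_def)
    next
      assume "\<exists>k. atk_tip ?bs = Some k \<and> k < ?n \<and> xs ! k = Att \<and>
       (\<forall>m. k < m \<and> m < ?n \<longrightarrow> xs ! m \<noteq> Att) \<and> hgt ?bs (Some k) = cA xs ?n"
      then obtain k where k: "atk_tip ?bs = Some k" "k < ?n" "xs ! k = Att"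
        "\<forall>m. k < m \<and> m < ?n \<longrightarrow> xs ! m \<noteq> Att" "hgt ?bs (Some k) = cA xs ?n" by blast
      then show ?thesis using Att cA1 cA0 na by (simp add: binv_def)
    qed
  next
    case HonH
    show ?thesis using hon_tip_prop[OF I]
    proof
      assume "hon_tip ?bs = None \<and> cH xs ?n = 0"
      then show ?thesis using HonH cH1 cH0 by (simp add: binv_def)
    next
      assume "\<exists>k. hon_tip ?bs = Some k \<and> k < ?n \<and> xs ! k \<noteq> Att \<and> hgt ?bs (Some k) = cH xs ?n"
      then obtain k where k: "hon_tip ?bs = Some k" "k < ?n" "xs ! k \<noteq> Att" "hgt ?bs (Some k) = cH xs ?n" by blast
      then show ?thesis using HonH cH1 cH0 na by (simp add: binv_def)
    qed
  next
    case HonA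
    show ?thesis
    proof (cases "cH xs ?n = 0")
      case True
      then show ?thesis using HonA hh cH1 cH0 by (simp add: binv_def atk_at_def Let_def)
    next
      case False
      let ?h = "cH xs ?n"
      have "cH (xs @ [x]) ?n \<le> cA (xs @ [x]) ?n" using G HonA by (simp add: good_def)
      then have "?h \<le> cA xs ?n" using cA0 cH0 by simp
      then obtain i where i: "i < ?n" "xs ! i = Att" "cA xs (Suc i) = ?h"
        using cA_ivt[of ?h xs ?n] False by auto
      let ?P = "\<lambda>b. fst b = Att \<and> fst (snd b) = ?h"
      have "?P (?bs ! i)" using i inv_fst[OF I] inv_ht[OF I] by simp
      then have "last_idx ?P ?bs \<noteq> None" using i by (simp add: last_idx_None) blast
      then obtain k where kk: "last_idx ?P ?bs = Some k" by blast
      then have "k < ?n" "?P (?bs ! k)" using last_idx_Some[OF kk] by auto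
      then have k: "k < ?n" "xs ! k = Att" "hgt ?bs (Some k) = ?h"
        using inv_fst[OF I] by (auto simp: hgt_def)
      have "atk_at ?bs ?h = Some k" using False kk by (simp add: atk_at_def)
      then show ?thesis using HonA hh cH1 cH0 k na by (simp add: binv_def Let_def)
    qed
  qed
qed

lemma good_snoc: "good (xs @ [x]) \<Longrightarrow> good xs"
  unfolding good_def by (auto simp: nth_append cA_snoc cH_snoc)

lemma inv_blocks: "good xs \<Longrightarrow> blinv xs"
proof (induction xs rule: rev_induct)
  case Nil then show ?case by (simp add: blinv_def)
next
  case (snoc x xs)
  have I: "blinv xs" using snoc good_snoc by blast
  show ?case unfolding blinv_def
  proof (intro allI impI)
    fix i assume i: "i < length (xs @ [x])"
    show "binv (xs @ [x]) i (blocks (xs @ [x]) ! i)"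
    proof (cases "i < length xs")
      case True
      then show ?thesis using I by (simp add: blocks_snoc nth_append binv_snoc blinv_def)
    next
      case False
      then have "i = length xs" using i by simp
      then show ?thesis using new_block_binv[OF I snoc.prems] by (simp add: blocks_snoc nth_append)
    qed
  qed
qed

lemma cH_mono: "k \<le> j \<Longrightarrow> cH xs k \<le> cH xs j"
proof -
  assume "k \<le> j"
  then obtain d where "j = k + d" using le_Suc_ex by blast
  then show ?thesis by (simp add: cH_def take_add)
qed

lemma att_before: "i < j \<Longrightarrow> j \<le> length xs \<Longrightarrow> xs ! i = Att \<Longrightarrow> Suc (cA xs i) \<le> cA xs j"
  using cA_mono[of "Suc i" j xs] cA_Suc[of i xs] by simp

lemma hon_before: "i < j \<Longrightarrow> j \<le> length xs \<Longrightarrow> xs ! i \<noteq> Att \<Longrightarrow> Suc (cH xs i) \<le> cH xs j"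
  using cH_mono[of "Suc i" j xs] cH_Suc[of i xs] by simp

lemma chain_None: "chain f bs None = {}"
  by (cases f) auto

lemma chain_att:
  assumes I: "blinv xs"
  shows "j < length xs \<Longrightarrow> xs ! j = Att \<Longrightarrow> cA xs (Suc j) < f \<Longrightarrow>
     chain f (blocks xs) (Some j) = {i. i \<le> j \<and> xs ! i = Att}"
proof (induction f arbitrary: j)
  case 0 then show ?case by simp
next
  case (Suc f)
  have B: "binv xs j (blocks xs ! j)" using I Suc.prems by (simp add: blinv_def)
  show ?case
  proof (cases "snd (snd (blocks xs ! j))")
    case None
    then have "cA xs j = 0" using B Suc.prems by (simp add: binv_def)
    then have "\<forall>i<j. xs ! i \<noteq> Att" using att_before[of _ j xs] Suc.prems by fastforce
    then have "{i. i \<le> j \<and> xs ! i = Att} = {j}" using Suc.prems by (auto simp: le_less)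
    then show ?thesis using None by (simp add: chain_None)
  next
    case (Some k)
    then have k: "k < j" "xs ! k = Att" "\<forall>m. k < m \<and> m < j \<longrightarrow> xs ! m \<noteq> Att"
      using B Suc.prems by (simp_all add: binv_def)
    have "cA xs j = cA xs (Suc k)" using k Suc.prems by (intro cA_const) auto
    then have "cA xs (Suc k) < f" using Suc.prems cA_Suc[of j xs] by simp
    then have IH: "chain f (blocks xs) (Some k) = {i. i \<le> k \<and> xs ! i = Att}"
      using Suc.IH[of k] k Suc.prems by simp
    have "{i. i \<le> j \<and> xs ! i = Att} = insert j {i. i \<le> k \<and> xs ! i = Att}"
      using k Suc.prems by (auto simp: le_less) (meson not_less_iff_gr_or_eq)
    then show ?thesis using Some IH by simp
  qed
qed

lemma hd_filter_upt: "filter P [0..<n] \<noteq> [] \<Longrightarrow> m < hd (filter P [0..<n]) \<Longrightarrow> \<not> P m"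
proof (induction n)
  case 0 then show ?case by simp
next
  case (Suc n)
  show ?case
  proof (cases "filter P [0..<n] = []")
    case True
    then have "\<forall>m<n. \<not> P m" by (auto simp: filter_empty_conv)
    then show ?thesis using Suc.prems True by (auto split: if_splits)
  next
    case False
    then show ?thesis using Suc by auto
  qed
qed

context
  fixes ev :: "event list"
  assumes G: "good ev" and F: "cA ev (length ev) = Suc (cH ev (length ev))"
begin

lemma I: "blinv ev" using G by (rule inv_blocks)

lemma top_height_eq: "top_height ev = cA ev (length ev)"
proof -
  let ?n = "length ev" and ?m = "cA ev (length ev)"
  let ?S = "insert 0 ((\<lambda>b. fst (snd b)) ` set (blocks ev))"
  have le: "y \<le> ?m" if "y \<in> ?S" for y
  proof -
    have "y = 0 \<or> (\<exists>i<?n. y = fst (snd (blocks ev ! i)))"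
      using that by (auto simp: in_set_conv_nth) (metis fst_conv snd_conv)
    then consider "y = 0" | i where "i < ?n" "y = fst (snd (blocks ev ! i))" by blast
    then show ?thesis
    proof cases
      case 2
      then have y: "y = (if ev ! i = Att then cA ev (Suc i) else cH ev (Suc i))" using inv_ht[OF I] by simp
      have "cA ev (Suc i) \<le> ?m" "cH ev (Suc i) \<le> cH ev ?n" using 2 by (auto intro: cA_mono cH_mono)
      then show ?thesis using y F by auto
    qed simp
  qed
  obtain i where i: "i < ?n" "ev ! i = Att" "cA ev (Suc i) = ?m" using cA_ivt[of ?m ev ?n] F by auto
  have "blocks ev ! i \<in> set (blocks ev)" using i by simp
  then have "fst (snd (blocks ev ! i)) \<in> ?S" by blast
  then have "?m \<in> ?S" using i inv_ht[OF I, of i] by simp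
  then have "Max ?S = ?m" using le by (intro Max_eqI) auto
  then show ?thesis by (simp add: top_height_def)
qed

lemma top_block_eq: "\<exists>k. top_block ev = Some k \<and> k < length ev \<and> ev ! k = Att \<and> cA ev (Suc k) = cA ev (length ev)"
proof -
  let ?n = "length ev" and ?m = "cA ev (length ev)"
  let ?P = "\<lambda>b. fst (snd b) = top_height ev"
  obtain i where i: "i < ?n" "ev ! i = Att" "cA ev (Suc i) = ?m" using cA_ivt[of ?m ev ?n] F by auto
  have "?P (blocks ev ! i)" using i inv_ht[OF I, of i] top_height_eq by simp
  then have "last_idx ?P (blocks ev) \<noteq> None" using i by (auto simp: last_idx_None)
  then obtain k where kk: "last_idx ?P (blocks ev) = Some k" by blast
  then have k: "k < ?n" "fst (snd (blocks ev ! k)) = ?m" using last_idx_Some[OF kk] top_height_eq by auto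
  have "ev ! k = Att"
  proof (rule ccontr)
    assume "ev ! k \<noteq> Att"
    then have "cH ev (Suc k) = ?m" using k inv_ht[OF I, of k] by simp
    moreover have "cH ev (Suc k) \<le> cH ev ?n" using k by (intro cH_mono) auto
    ultimately show False using F by simp
  qed
  then show ?thesis using kk k inv_ht[OF I, of k] by (simp add: top_block_def)
qed

lemma official_eq: "official ev = {i. i < length ev \<and> ev ! i = Att}"
proof -
  let ?n = "length ev" and ?m = "cA ev (length ev)"
  obtain k where k: "top_block ev = Some k" "k < ?n" "ev ! k = Att" "cA ev (Suc k) = ?m"
    using top_block_eq by blast
  have "cA ev (Suc k) < Suc ?n" using cA_le_len[of ev "Suc k"] by simp
  then have "official ev = {i. i \<le> k \<and> ev ! i = Att}"
    unfolding official_def using chain_att[OF I k(2) k(3), of "Suc (length ev)"] k(1) by (simp del: chain.simps)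
  also have "\<dots> = {i. i < ?n \<and> ev ! i = Att}"
  proof (intro set_eqI iffI)
    fix i assume "i \<in> {i. i < ?n \<and> ev ! i = Att}"
    then have i: "i < ?n" "ev ! i = Att" by auto
    have "i \<le> k"
    proof (rule ccontr)
      assume "\<not> i \<le> k"
      then have "Suc (cA ev i) \<le> cA ev ?n" "cA ev (Suc k) \<le> cA ev i"
        using i att_before[of i ?n ev] by (auto intro: cA_mono)
      then show False using k by simp
    qed
    then show "i \<in> {i. i \<le> k \<and> ev ! i = Att}" using i by simp
  qed (use k in auto)
  finally show ?thesis .
qed

lemma uncle_eq: "is_uncle ev j \<longleftrightarrow> j < length ev \<and> ev ! j \<noteq> Att \<and> (ev ! j = HonA \<or> cH ev j = 0)"
proof (cases "j < length ev")
  case True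
  have B: "binv ev j (blocks ev ! j)" using I True by (simp add: blinv_def)
  show ?thesis
  proof (cases "ev ! j")
    case Att then show ?thesis using True by (simp add: is_uncle_def official_eq)
  next
    case HonH
    show ?thesis
    proof (cases "bparent ev j")
      case None
      then show ?thesis using B HonH True by (simp add: is_uncle_def official_eq bparent_def binv_def)
    next
      case (Some k)
      then have k: "k < j" "ev ! k \<noteq> Att" using B HonH by (simp_all add: bparent_def binv_def)
      then have "cH ev j \<noteq> 0" using hon_before[of k j ev] True by simp
      then show ?thesis using Some k HonH True by (simp add: is_uncle_def official_eq)
    qed
  next
    case HonA
    show ?thesis
    proof (cases "bparent ev j")
      case None
      then show ?thesis using HonA True by (simp add: is_uncle_def official_eq)
    next
      case (Some k)
      then have k: "k < j" "ev ! k = Att" using B HonA by (simp_all add: bparent_def binv_def)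
      then show ?thesis using Some HonA True by (simp add: is_uncle_def official_eq)
    qed
  qed
qed (simp add: is_uncle_def)

lemma dist_eq: "j < length ev \<Longrightarrow> ev ! j \<noteq> Att \<Longrightarrow> dist ev j = cA ev j - cH ev j"
proof -
  assume j: "j < length ev" "ev ! j \<noteq> Att"
  let ?n = "length ev"
  have bj: "bheight ev j = Suc (cH ev j)" using j inv_ht[OF I, of j] cH_Suc[of j ev] by (simp add: bheight_def)
  have cAj: "cA ev (Suc j) = cA ev j" using j cA_Suc[of j ev] by simp
  have pt: "pub_time ev j = j" using j by (simp add: pub_time_def)
  define ks where "ks = filter (\<lambda>k. k \<in> official ev \<and> k > j) [0..<?n]"
  have ks: "ks = filter (\<lambda>k. j < k \<and> k < ?n \<and> ev ! k = Att) [0..<?n]"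
    unfolding ks_def official_eq by (rule filter_cong) auto
  have "nephew_height ev j = Suc (cA ev j)"
  proof (cases "ks = []")
    case True
    then have "\<forall>m. Suc j \<le> m \<and> m < ?n \<longrightarrow> ev ! m \<noteq> Att" by (auto simp: ks filter_empty_conv)
    then have "cA ev ?n = cA ev (Suc j)" using j by (intro cA_const) auto
    then show ?thesis using True pt cAj top_height_eq by (simp add: nephew_height_def ks_def[symmetric])
  next
    case False
    define k0 where "k0 = hd ks"
    have "k0 \<in> set ks" using False by (simp add: k0_def)
    then have k0: "j < k0" "k0 < ?n" "ev ! k0 = Att" by (auto simp: ks)
    have F': "filter (\<lambda>k. j < k \<and> k < ?n \<and> ev ! k = Att) [0..<?n] \<noteq> []" using False ks by simp
    have hf: "\<not> (j < m \<and> m < ?n \<and> ev ! m = Att)" if "m < k0" for m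
      using hd_filter_upt[OF F', of m] that unfolding k0_def ks by simp
    have "\<forall>m. Suc j \<le> m \<and> m < k0 \<longrightarrow> ev ! m \<noteq> Att"
      using hf k0 by auto
    then have "cA ev k0 = cA ev (Suc j)" using k0 by (intro cA_const) auto
    then have "bheight ev k0 = Suc (cA ev j)"
      using k0 inv_ht[OF I, of k0] cA_Suc[of k0 ev] cAj by (simp add: bheight_def)
    then show ?thesis using False pt by (simp add: nephew_height_def ks_def[symmetric] k0_def)
  qed
  then show ?thesis using bj by (simp add: dist_def)
qed

lemma Delta_eq: "Delta n1 ev = (\<Sum>j<length ev. if ev ! j \<noteq> Att \<and> (ev ! j = HonA \<or> cH ev j = 0) \<and> cA ev j - cH ev j \<le> n1
    then cA ev j - cH ev j else 0)"
proof -
  have "{j. is_uncle ev j \<and> dist ev j \<le> n1} = {j \<in> {..<length ev}. is_uncle ev j \<and> dist ev j \<le> n1}"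
    by (auto simp: is_uncle_def)
  then have "Delta n1 ev = sum (dist ev) {j \<in> {..<length ev}. is_uncle ev j \<and> dist ev j \<le> n1}"
    unfolding Delta_def by simp
  also have "\<dots> = (\<Sum>j<length ev. if is_uncle ev j \<and> dist ev j \<le> n1 then dist ev j else 0)"
    by (rule sum.inter_filter) simp
  also have "\<dots> = (\<Sum>j<length ev. if ev ! j \<noteq> Att \<and> (ev ! j = HonA \<or> cH ev j = 0) \<and> cA ev j - cH ev j \<le> n1
    then cA ev j - cH ev j else 0)"
  proof (rule sum.cong[OF refl])
    fix j assume "j \<in> {..<length ev}"
    then have j: "j < length ev" by simp
    show "(if is_uncle ev j \<and> dist ev j \<le> n1 then dist ev j else 0) =
      (if ev ! j \<noteq> Att \<and> (ev ! j = HonA \<or> cH ev j = 0) \<and> cA ev j - cH ev j \<le> n1 then cA ev j - cH ev j else 0)"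
    proof (cases "ev ! j = Att")
      case True
      then show ?thesis using uncle_eq[of j] by simp
    next
      case False
      then show ?thesis using uncle_eq[of j] dist_eq[OF j False] j by simp
    qed
  qed
  finally show ?thesis .
qed


end

fun Dl :: "nat \<Rightarrow> nat \<Rightarrow> bool \<Rightarrow> event list \<Rightarrow> nat" where
  "Dl n1 L fl [] = 0"
| "Dl n1 L fl (x # xs) = (if x = Att then Dl n1 (Suc L) fl xs
     else (if (fl \<or> x = HonA) \<and> L \<le> n1 then L else 0) + Dl n1 (L - 1) False xs)"

fun lok :: "nat \<Rightarrow> event list \<Rightarrow> bool" where
  "lok L [] = True"
| "lok L (x # xs) = (if x = Att then lok (Suc L) xs else 1 \<le> L \<and> lok (L - 1) xs)"

fun valid :: "etree \<Rightarrow> bool" where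
  "valid (Lf e) = (e \<noteq> Att)"
| "valid (Nd a b) = (valid a \<and> valid b)"

lemma cA_Cons_Suc: "cA (x # xs) (Suc j) = (if x = Att then 1 else 0) + cA xs j"
  by (simp add: cA_def)
lemma cH_Cons_Suc: "cH (x # xs) (Suc j) = (if x = Att then 0 else 1) + cH xs j"
  by (simp add: cH_def)

lemma Dl_sum: "lok L xs \<Longrightarrow> Dl n1 L fl xs = (\<Sum>j<length xs. if xs ! j \<noteq> Att \<and> (xs ! j = HonA \<or> (fl \<and> cH xs j = 0))
      \<and> L + cA xs j - cH xs j \<le> n1 then L + cA xs j - cH xs j else 0)"
proof (induction xs arbitrary: L fl)
  case Nil then show ?case by simp
next
  case (Cons x xs)
  let ?f = "\<lambda>L fl xs j. if xs ! j \<noteq> Att \<and> (xs ! j = HonA \<or> (fl \<and> cH xs j = 0))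
      \<and> L + cA xs j - cH xs j \<le> n1 then L + cA xs j - cH xs j else 0"
  have sh: "(\<Sum>j<length (x # xs). ?f L fl (x # xs) j) = ?f L fl (x # xs) 0 + (\<Sum>j<length xs. ?f L fl (x # xs) (Suc j))"
    by (simp add: sum.lessThan_Suc_shift del: sum.lessThan_Suc)
  show ?case
  proof (cases "x = Att")
    case True
    have "?f L fl (x # xs) (Suc j) = ?f (Suc L) fl xs j" for j
      using True by (simp add: cA_Cons_Suc cH_Cons_Suc)
    then show ?thesis using True Cons sh by simp
  next
    case False
    then have L: "1 \<le> L" "lok (L - 1) xs" using Cons.prems by auto
    have "?f L fl (x # xs) (Suc j) = ?f (L - 1) False xs j" for j
      using False L by (simp add: cA_Cons_Suc cH_Cons_Suc)
    moreover have "?f L fl (x # xs) 0 = (if (fl \<or> x = HonA) \<and> L \<le> n1 then L else 0)"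
      using False by auto
    ultimately show ?thesis using False Cons.IH[OF L(2)] sh by simp
  qed
qed

lemma lok_good: "lok L xs \<Longrightarrow> j < length xs \<Longrightarrow> xs ! j \<noteq> Att \<Longrightarrow> cH xs j < L + cA xs j"
proof (induction xs arbitrary: L j)
  case Nil then show ?case by simp
next
  case (Cons x xs)
  show ?case
  proof (cases j)
    case 0 then show ?thesis using Cons.prems by (auto split: if_splits)
  next
    case (Suc i)
    then show ?thesis using Cons.prems Cons.IH[of "Suc L" i] Cons.IH[of "L - 1" i]
      by (auto simp: cA_Cons_Suc cH_Cons_Suc split: if_splits)
  qed
qed

lemma Dl_enc: "valid t \<Longrightarrow> Dl n1 L fl (enc t @ rest) = st n1 fl L t + Dl n1 (L - 1) False rest"
  by (induction t arbitrary: L fl rest) auto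

lemma lok_enc: "valid t \<Longrightarrow> lok L (enc t @ rest) = (1 \<le> L \<and> lok (L - 1) rest)"
  by (induction t arbitrary: L rest) auto

lemma count_enc: "valid t \<Longrightarrow> length (filter (\<lambda>e. e \<noteq> Att) (enc t)) = Suc (length (filter (\<lambda>e. e = Att) (enc t)))"
  by (induction t) auto

lemma Delta_Dl:
  assumes lk: "lok 0 ev" and G: "good ev" and F: "cA ev (length ev) = Suc (cH ev (length ev))"
  shows "Delta n1 ev = Dl n1 0 True ev"
  unfolding Delta_eq[OF G F] Dl_sum[OF lk] add_0 by simp

lemma Delta_tree:
  assumes v: "valid t"
  shows "Delta n1 (Att # Att # enc t) = st n1 True 2 t"
proof -
  let ?ev = "Att # Att # enc t"
  have lk: "lok 0 ?ev" using lok_enc[OF v, of "Suc (Suc 0)" "[]"] by simp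
  have G: "good ?ev" unfolding good_def using lok_good[OF lk] by (auto simp: less_imp_le)
  have F: "cA ?ev (length ?ev) = Suc (cH ?ev (length ?ev))"
    using count_enc[OF v] by (simp add: cA_def cH_def)
  have "Delta n1 ?ev = Dl n1 0 True ?ev"
    by (rule Delta_Dl[OF lk G F])
  also have "\<dots> = st n1 True 2 t" using Dl_enc[OF v, of n1 2 True "[]"] by (simp add: numeral_2_eq_2)
  finally show ?thesis .
qed

lemmas evdefs = blocks_def atk_tip_def hon_tip_def last_idx_def hgt_def atk_at_def upt_rec

lemma B1: "blocks [Att, HonH, HonH] = [(Att,1,None),(HonH,1,None),(HonH,2,Some 1)]"
    by (simp add: evdefs)
lemma T1: "top_height [Att, HonH, HonH] = 2" by (simp add: top_height_def B1)
lemma O1: "official [Att, HonH, HonH] = {Suc 0, Suc (Suc 0)}"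
    by (simp add: official_def top_block_def T1 B1 last_idx_def upt_rec insert_commute)
lemma U1: "is_uncle [Att, HonH, HonH] j \<longleftrightarrow> j = 0" for j
    by (auto simp: is_uncle_def O1 bparent_def B1 less_Suc_eq)
lemma D1: "dist [Att, HonH, HonH] 0 = 1"
    by (simp add: dist_def nephew_height_def pub_time_def O1 bheight_def B1 upt_rec)

lemma B2: "blocks [Att, HonH, HonA] = [(Att,1,None),(HonH,1,None),(HonA,2,Some 0)]"
    by (simp add: evdefs)
lemma T2: "top_height [Att, HonH, HonA] = 2" by (simp add: top_height_def B2)
lemma O2: "official [Att, HonH, HonA] = {0, Suc (Suc 0)}"
    by (simp add: official_def top_block_def T2 B2 last_idx_def upt_rec insert_commute)
lemma U2: "is_uncle [Att, HonH, HonA] j \<longleftrightarrow> j = Suc 0" for j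
    by (auto simp: is_uncle_def O2 bparent_def B2 less_Suc_eq)
lemma D2: "dist [Att, HonH, HonA] (Suc 0) = 1"
    by (simp add: dist_def nephew_height_def pub_time_def O2 bheight_def B2 upt_rec)

lemma B3: "blocks [Att, HonH, Att] = [(Att,1,None),(HonH,1,None),(Att,2,Some 0)]"
    by (simp add: evdefs)
lemma T3: "top_height [Att, HonH, Att] = 2" by (simp add: top_height_def B3)
lemma O3: "official [Att, HonH, Att] = {0, Suc (Suc 0)}"
    by (simp add: official_def top_block_def T3 B3 last_idx_def upt_rec insert_commute)
lemma U3: "is_uncle [Att, HonH, Att] j \<longleftrightarrow> j = Suc 0" for j
    by (auto simp: is_uncle_def O3 bparent_def B3 less_Suc_eq)
lemma D3: "dist [Att, HonH, Att] (Suc 0) = 1"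
    by (simp add: dist_def nephew_height_def pub_time_def O3 bheight_def B3 upt_rec)

lemma B4: "blocks [HonH] = [(HonH,1,None)]" by (simp add: evdefs)
lemma T4: "top_height [HonH] = 1" by (simp add: top_height_def B4)
lemma O4: "official [HonH] = {0}"
    by (simp add: official_def top_block_def T4 B4 last_idx_def upt_rec)

lemma small_Delta:
  assumes "2 \<le> n1"
  shows "Delta n1 [Att, HonH, HonH] = 1" "Delta n1 [Att, HonH, HonA] = 1"
    "Delta n1 [Att, HonH, Att] = 1" "Delta n1 [HonH] = 0"
proof -
  have "{j. is_uncle [Att, HonH, HonH] j \<and> dist [Att, HonH, HonH] j \<le> n1} = {0}"
    unfolding U1 using D1 assms by auto
  then show "Delta n1 [Att, HonH, HonH] = 1" unfolding Delta_def using D1 by simp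
  have "{j. is_uncle [Att, HonH, HonA] j \<and> dist [Att, HonH, HonA] j \<le> n1} = {Suc 0}"
    unfolding U2 using D2 assms by auto
  then show "Delta n1 [Att, HonH, HonA] = 1" unfolding Delta_def using D2 by simp
  have "{j. is_uncle [Att, HonH, Att] j \<and> dist [Att, HonH, Att] j \<le> n1} = {Suc 0}"
    unfolding U3 using D3 assms by auto
  then show "Delta n1 [Att, HonH, Att] = 1" unfolding Delta_def using D3 by simp
  have "\<not> is_uncle [HonH] j" for j unfolding is_uncle_def O4 by auto
  then show "Delta n1 [HonH] = 0" unfolding Delta_def by simp
qed

lemma letter_S: "letter_of e = S \<longleftrightarrow> e = Att" by (cases e) auto
lemma letter_H: "letter_of e = H \<longleftrightarrow> e \<noteq> Att" by (cases e) auto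

lemma filter_honest_enc: "valid t \<Longrightarrow> filter is_honest (enc t) = lvs t"
  by (induction t) (auto simp: is_honest_def)

lemma len_lvs: "length (lvs t) = Suc (nodes t)"
  by (induction t) auto

lemma len_enc: "length (enc t) = Suc (2 * nodes t)"
  by (induction t) auto

lemma valid_lvs: "valid t \<Longrightarrow> \<forall>e\<in>set (lvs t). e \<noteq> Att"
  by (induction t) auto

lemma lvs_ne: "lvs t \<noteq> []"
  by (induction t) auto

lemma letters_enc: "valid t \<Longrightarrow> \<exists>v. map letter_of (enc t) = v @ [H] \<and> (\<forall>n rest. dyck_aux n (v @ rest) = dyck_aux n rest)"
proof (induction t)
  case (Lf e)
  then show ?case by (auto simp: letter_H)
next
  case (Nd a b)
  then obtain va vb where a: "map letter_of (enc a) = va @ [H]" "\<forall>n rest. dyck_aux n (va @ rest) = dyck_aux n rest"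
    and b: "map letter_of (enc b) = vb @ [H]" "\<forall>n rest. dyck_aux n (vb @ rest) = dyck_aux n rest" by auto
  have "map letter_of (enc (Nd a b)) = (S # va @ H # vb) @ [H]" using a b by simp
  moreover have "dyck_aux n ((S # va @ H # vb) @ rest) = dyck_aux n rest" for n rest
  proof -
    have "dyck_aux n ((S # va @ H # vb) @ rest) = dyck_aux (Suc n) (va @ (H # vb @ rest))" by simp
    also have "\<dots> = dyck_aux (Suc n) (H # vb @ rest)" using a(2) by blast
    also have "\<dots> = dyck_aux n (vb @ rest)" by simp
    also have "\<dots> = dyck_aux n rest" using b(2) by blast
    finally show ?thesis .
  qed
  ultimately show ?case by blast
qed

lemma prod_lw: "(\<forall>e\<in>set l. e \<noteq> Att) \<Longrightarrow>
   prod_list (map (lw p \<gamma>) l) = p ^ length l * prod_list (map (\<lambda>e. if e = HonA then \<gamma> else 1 - \<gamma>) l)"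
proof (induction l)
  case Nil then show ?case by simp
next
  case (Cons e l)
  then have "lw p \<gamma> e = p * (if e = HonA then \<gamma> else 1 - \<gamma>)" by (cases e) (auto simp: lw_def)
  then show ?case using Cons by simp
qed

lemma wt_False_eq: "wt p q \<gamma> False t = q ^ nodes t * prod_list (map (lw p \<gamma>) (lvs t))"
  by (induction t) (auto simp: power_add)

lemma wt_True_eq: "wt p q \<gamma> True t = (if hd (lvs t) = HonH then p * q ^ nodes t * prod_list (map (lw p \<gamma>) (tl (lvs t))) else 0)"
proof (induction t)
  case (Lf e) then show ?case by simp
next
  case (Nd a b)
  have "hd (lvs a @ lvs b) = hd (lvs a)" "tl (lvs a @ lvs b) = tl (lvs a) @ lvs b" using lvs_ne[of a] by auto
  then show ?case using Nd by (simp add: wt_False_eq power_add)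
qed

lemma wt_invalid: "\<not> valid t \<Longrightarrow> wt p q \<gamma> fl t = 0"
proof (induction t arbitrary: fl)
  case (Lf e) then show ?case by (auto simp: lw_def)
next
  case (Nd a b) then show ?case by auto
qed

lemma cycle_prob_tree:
  assumes v: "valid t"
  shows "cycle_prob p q \<gamma> (Att # Att # enc t) = q^2 * wt p q \<gamma> True t"
proof -
  obtain v where v1: "map letter_of (enc t) = v @ [H]" and v2: "\<forall>n rest. dyck_aux n (v @ rest) = dyck_aux n rest"
    using letters_enc[OF v] by blast
  have dy: "dyck v" using v2 by (simp add: dyck_def) (metis append_Nil2 dyck_aux.simps(1))
  let ?w = "map letter_of (Att # Att # enc t)"
  have w: "?w = [S, S] @ v @ [H]" using v1 by simp
  have lw: "length ?w = Suc (Suc (Suc (2 * nodes t)))" by (simp add: len_enc)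
  have wp: "word_prob p q ?w = q^2 * p * (p * q) ^ nodes t"
    using dy w lw unfolding word_prob_def by auto
  have hs: "filter is_honest (Att # Att # enc t) = lvs t" using v by (simp add: filter_honest_enc is_honest_def)
  have pl: "prod_list (map (lw p \<gamma>) (tl (lvs t))) = p ^ nodes t * prod_list (map (\<lambda>e. if e = HonA then \<gamma> else 1 - \<gamma>) (tl (lvs t)))"
    using prod_lw[of "tl (lvs t)" p \<gamma>] valid_lvs[OF v] len_lvs[of t] by (simp add: list.set_sel(2) lvs_ne)
  show ?thesis
    unfolding cycle_prob_def Let_def hs wt_True_eq using lvs_ne[of t] wp pl
    by (simp add: power_mult_distrib algebra_simps)
qed


lemma dyck_trees: "dyck_aux n (map letter_of w) \<Longrightarrow> e \<noteq> Att \<Longrightarrow>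
   \<exists>ts. length ts = Suc n \<and> w @ [e] = concat (map enc ts) \<and> (\<forall>t\<in>set ts. valid t)"
proof (induction w arbitrary: n)
  case Nil
  then have "n = 0" by simp
  then show ?case using Nil by (intro exI[of _ "[Lf e]"]) auto
next
  case (Cons x w)
  show ?case
  proof (cases "x = Att")
    case True
    then have "dyck_aux (Suc n) (map letter_of w)" using Cons.prems by simp
    then obtain ts where ts: "length ts = Suc (Suc n)" "w @ [e] = concat (map enc ts)" "\<forall>t\<in>set ts. valid t"
      using Cons.IH Cons.prems by blast
    then obtain t1 t2 rest where tr: "ts = t1 # t2 # rest"
      by (metis length_Suc_conv)
    show ?thesis
      using ts tr True by (intro exI[of _ "Nd t1 t2 # rest"]) auto
  next
    case False
    then have lx: "letter_of x = H" by (simp add: letter_H)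
    then obtain m where m: "n = Suc m" "dyck_aux m (map letter_of w)" using Cons.prems
      by (cases n) auto
    then obtain ts where ts: "length ts = Suc m" "w @ [e] = concat (map enc ts)" "\<forall>t\<in>set ts. valid t"
      using Cons.IH Cons.prems by blast
    show ?thesis using ts m False by (intro exI[of _ "Lf x # ts"]) auto
  qed
qed

lemma map_SS: assumes m: "map letter_of ev = S # S # r" shows "\<exists>u. ev = Att # Att # u \<and> map letter_of u = r"
proof (cases ev)
  case Nil then show ?thesis using m by simp
next
  case (Cons a ev')
  show ?thesis
  proof (cases ev')
    case Nil then show ?thesis using m Cons by simp
  next
    case (Cons b u)
    then have "letter_of a = S" "letter_of b = S" "map letter_of u = r" using m \<open>ev = a # ev'\<close> by simp_all
    then show ?thesis using Cons \<open>ev = a # ev'\<close> by (simp add: letter_S)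
  qed
qed

lemma map_snoc_H: assumes m: "map letter_of u = v @ [H]" shows "\<exists>w e. u = w @ [e] \<and> map letter_of w = v \<and> e \<noteq> Att"
proof (cases u rule: rev_exhaust)
  case Nil then show ?thesis using m by simp
next
  case (snoc w e)
  then have "map letter_of w = v" "letter_of e = H" using snoc m by simp_all
  then show ?thesis using snoc by (simp add: letter_H)
qed

lemma wp_cases: "word_prob p q w \<noteq> 0 \<Longrightarrow> w = [H] \<or> w = [S,H,S] \<or> w = [S,H,H] \<or> (\<exists>v. dyck v \<and> w = [S,S] @ v @ [H])"
  unfolding word_prob_def by (auto split: if_splits)

lemma support:
  assumes "cycle_prob p q \<gamma> ev \<noteq> 0"
  shows "ev \<in> {[HonH], [Att, HonH, Att], [Att, HonH, HonH], [Att, HonH, HonA]} \<or> (\<exists>t. valid t \<and> ev = Att # Att # enc t)"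
proof -
  let ?hs = "filter is_honest ev"
  let ?w = "map letter_of ev"
  have hs: "?hs \<noteq> [] \<and> hd ?hs = HonH" and wp: "word_prob p q ?w \<noteq> 0"
    using assms by (auto simp: cycle_prob_def Let_def split: if_splits)
  consider "?w = [H]" | "?w = [S, H, S]" | "?w = [S, H, H]" | v where "dyck v" "?w = [S, S] @ v @ [H]"
    using wp_cases[OF wp] by blast
  then show ?thesis
  proof cases
    case 1
    then have "\<exists>e. ev = [e] \<and> letter_of e = H" by (simp add: map_eq_Cons_conv)
    then obtain e where e: "ev = [e]" "letter_of e = H" by blast
    then have "e = HonH" using hs by (cases e) (auto simp: is_honest_def)
    then show ?thesis using e by simp
  next
    case 2
    then have "\<exists>a b c. ev = [a, b, c] \<and> letter_of a = S \<and> letter_of b = H \<and> letter_of c = S"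
      by (simp add: map_eq_Cons_conv) blast
    then obtain a b c where e: "ev = [a, b, c]" "letter_of a = S" "letter_of b = H" "letter_of c = S" by blast
    then have a: "a = Att" "c = Att" by (simp_all add: letter_S)
    moreover have "b = HonH" using hs e(1,3) a by (cases b) (auto simp: is_honest_def)
    ultimately show ?thesis using e by simp
  next
    case 3
    then have "\<exists>a b c. ev = [a, b, c] \<and> letter_of a = S \<and> letter_of b = H \<and> letter_of c = H"
      by (simp add: map_eq_Cons_conv) blast
    then obtain a b c where e: "ev = [a, b, c]" "letter_of a = S" "letter_of b = H" "letter_of c = H" by blast
    then have a: "a = Att" by (simp_all add: letter_S)
    moreover have "b = HonH" using hs e(1,3) a by (cases b) (auto simp: is_honest_def)
    moreover have "c = HonH \<or> c = HonA" using e(4) by (cases c) auto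
    ultimately have "ev = [Att, HonH, HonH] \<or> ev = [Att, HonH, HonA]" using e(1) by blast
    then show ?thesis by blast
  next
    case 4
    obtain u where e: "ev = Att # Att # u" "map letter_of u = v @ [H]" using map_SS[of ev "v @ [H]"] 4(2) by auto
    obtain w e' where u: "u = w @ [e']" "map letter_of w = v" "e' \<noteq> Att" using map_snoc_H[OF e(2)] by blast
    have "dyck_aux 0 (map letter_of w)" using 4(1) u(2) by (simp add: dyck_def)
    then obtain ts where ts: "length ts = Suc 0" "w @ [e'] = concat (map enc ts)" "\<forall>t\<in>set ts. valid t"
      using dyck_trees[of 0 w e'] u(3) by blast
    then obtain t where "ts = [t]" by (auto simp: length_Suc_conv)
    then have et: "w @ [e'] = enc t" "valid t" using ts by auto
    then have "ev = Att # Att # enc t" using e u by simp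
    then show ?thesis using et(2) by blast
  qed
qed

lemma enc_inj_aux: "valid a \<Longrightarrow> valid c \<Longrightarrow> enc a @ x = enc c @ y \<Longrightarrow> a = c \<and> x = y"
proof (induction a arbitrary: c x y)
  case (Lf e)
  show ?case
  proof (cases c)
    case (Lf e') then show ?thesis using Lf.prems by simp
  next
    case (Nd c1 c2) then show ?thesis using Lf.prems by simp
  qed
next
  case (Nd a1 a2)
  show ?case
  proof (cases c)
    case (Lf e) then show ?thesis using Nd.prems by simp
  next
    case (Nd c1 c2)
    have v: "valid a1" "valid a2" "valid c1" "valid c2" using Nd.prems \<open>c = Nd c1 c2\<close> by simp_all
    have "enc a1 @ (enc a2 @ x) = enc c1 @ (enc c2 @ y)" using Nd.prems \<open>c = Nd c1 c2\<close> by simp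
    then have 1: "a1 = c1" and 2: "enc a2 @ x = enc c2 @ y" using Nd.IH(1)[OF v(1) v(3)] by blast+
    have "a2 = c2 \<and> x = y" using Nd.IH(2)[OF v(2) v(4) 2] .
    then show ?thesis using 1 \<open>c = Nd c1 c2\<close> by simp
  qed
qed

lemma inj_g: "inj_on (\<lambda>t. Att # Att # enc t) {t. valid t}"
  unfolding inj_on_def using enc_inj_aux[of _ _ "[]" "[]"] by auto

theorem proposition11:
  fixes p q \<gamma> :: real and n\<^sub>1 :: nat
  assumes "0 < q" and "q < p" and "p + q = 1"
    and "0 \<le> \<gamma>" and "\<gamma> \<le> 1" and "2 \<le> n\<^sub>1"
  shows "((\<lambda>ev. cycle_prob p q \<gamma> ev * real (Delta n\<^sub>1 ev)) has_sum
           (p * q + (p * q^2 * \<gamma> / (p - q)^2) *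
              (2 * p - q - (p + real n\<^sub>1 * (p - q)) * (q / p) ^ (n\<^sub>1 - 1))
            + ((1 - \<gamma>) * q / p) * (q * (1 + p) - (1 + real n\<^sub>1 * p) * q ^ n\<^sub>1))) UNIV"
proof -
  note A = assms(1-5)
  define c where "c = (\<lambda>ev. cycle_prob p q \<gamma> ev * real (Delta n\<^sub>1 ev))"
  define S0 where "S0 = {[HonH], [Att, HonH, Att], [Att, HonH, HonH], [Att, HonH, HonA]}"
  define V where "V = {t. valid t}"
  define g where "g = (\<lambda>t. Att # Att # enc t)"
  define X where "X = infsum (\<lambda>t. wt p q \<gamma> True t * real (st n\<^sub>1 True 2 t)) UNIV"
  have p0: "0 < p" using assms by simp
  have cS0: "sum c S0 = p * q"
  proof -
    have "c [HonH] = 0" using small_Delta[OF assms(6)] by (simp add: c_def)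
    moreover have "c [Att, HonH, Att] = p * q^2"
      using small_Delta[OF assms(6)] by (simp add: c_def cycle_prob_def word_prob_def is_honest_def)
    moreover have "c [Att, HonH, HonH] = p^2 * q * (1 - \<gamma>)"
      using small_Delta[OF assms(6)] by (simp add: c_def cycle_prob_def word_prob_def is_honest_def)
    moreover have "c [Att, HonH, HonA] = p^2 * q * \<gamma>"
      using small_Delta[OF assms(6)] by (simp add: c_def cycle_prob_def word_prob_def is_honest_def)
    ultimately have "sum c S0 = p * q^2 + p^2 * q * (1 - \<gamma>) + p^2 * q * \<gamma>"
      by (simp add: S0_def)
    also have "\<dots> = p * q * (p + q)" by (simp add: algebra_simps power2_eq_square)
    finally show ?thesis using assms(3) by simp
  qed
  have h0: "(c has_sum (p * q)) S0"
    by (rule has_sum_finiteI) (use cS0 in \<open>auto simp: S0_def\<close>)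
  have hT: "((\<lambda>t. q^2 * (wt p q \<gamma> True t * real (st n\<^sub>1 True 2 t))) has_sum (q^2 * X)) UNIV"
    unfolding X_def by (rule has_sum_cmult_right[OF has_sum_infsum[OF summ_G[OF A]]])
  have "((c \<circ> g) has_sum (q^2 * X)) V"
  proof -
    have "((c \<circ> g) has_sum (q^2 * X)) V \<longleftrightarrow> ((\<lambda>t. q^2 * (wt p q \<gamma> True t * real (st n\<^sub>1 True 2 t))) has_sum (q^2 * X)) UNIV"
    proof (rule has_sum_cong_neutral)
      fix t assume "t \<in> UNIV - V"
      then show "q^2 * (wt p q \<gamma> True t * real (st n\<^sub>1 True 2 t)) = 0" by (simp add: V_def wt_invalid)
    next
      fix t assume "t \<in> V \<inter> UNIV"
      then have v: "valid t" by (simp add: V_def)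
      show "(c \<circ> g) t = q^2 * (wt p q \<gamma> True t * real (st n\<^sub>1 True 2 t))"
        using cycle_prob_tree[OF v] Delta_tree[OF v] by (simp add: c_def g_def)
    qed simp
    then show ?thesis using hT by simp
  qed
  then have h1: "(c has_sum (q^2 * X)) (g ` V)"
    by (subst has_sum_reindex[OF inj_g[folded V_def g_def]])
  have dj: "S0 \<inter> g ` V = {}" by (auto simp: S0_def g_def)
  have h2: "(c has_sum (p * q + q^2 * X)) (S0 \<union> g ` V)"
    by (rule has_sum_Un_disjoint[OF h0 h1 dj])
  have h3: "(c has_sum (p * q + q^2 * X)) UNIV"
  proof -
    have "(c has_sum (p * q + q^2 * X)) UNIV \<longleftrightarrow> (c has_sum (p * q + q^2 * X)) (S0 \<union> g ` V)"
    proof (rule has_sum_cong_neutral)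
      fix ev assume "ev \<in> UNIV - (S0 \<union> g ` V)"
      then have "cycle_prob p q \<gamma> ev = 0" using support[of p q \<gamma> ev] by (auto simp: S0_def g_def V_def)
      then show "c ev = 0" by (simp add: c_def)
    qed auto
    then show ?thesis using h2 by simp
  qed
  have val: "p * q + q^2 * X = p * q + (p * q^2 * \<gamma> / (p - q)^2) *
              (2 * p - q - (p + real n\<^sub>1 * (p - q)) * (q / p) ^ (n\<^sub>1 - 1))
            + ((1 - \<gamma>) * q / p) * (q * (1 + p) - (1 + real n\<^sub>1 * p) * q ^ n\<^sub>1)"
  proof -
    obtain m where m: "n\<^sub>1 = Suc m" using assms(6) by (cases n\<^sub>1) auto
    define A' where "A' = (\<Sum>k=2..Suc m. real k * q ^ (k - 2))"
    define B' where "B' = (\<Sum>k=2..Suc m. real k * (q / p) ^ (k - 2))"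
    have "X = (\<Sum>k=2..n\<^sub>1. real k * (p * (1 - \<gamma>) * q ^ (k - 2) + \<gamma> * (q / p) ^ (k - 2)))"
      unfolding X_def by (rule G1_closed[OF A])
    also have "\<dots> = p * (1 - \<gamma>) * A' + \<gamma> * B'"
      unfolding A'_def B'_def m sum_distrib_left sum.distrib[symmetric]
      by (rule sum.cong) (simp_all add: algebra_simps)
    finally have XA: "X = p * (1 - \<gamma>) * A' + \<gamma> * B'" .
    have EA: "p^2 * A' = 2 - q - (real m + 2) * q^m + (real m + 1) * (q * q^m)"
    proof -
      have "1 - q = p" using assms(3) by simp
      then show ?thesis using Ssum[of q m] by (simp add: A'_def)
    qed
    have EB: "((p - q) / p)^2 * B' = 2 - q / p - (real m + 2) * (q / p)^m + (real m + 1) * ((q / p) * (q / p)^m)"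
    proof -
      have "1 - q / p = (p - q) / p" using p0 by (simp add: field_simps)
      then show ?thesis using Ssum[of "q / p" m] by (simp add: B'_def)
    qed
    have "q^2 * (p * (1 - \<gamma>) * A' + \<gamma> * B') = (p*q^2*\<gamma>/(p-q)^2)*(2*p - q - (p + (real m + 1)*(p-q))*(q / p)^m)
          + ((1-\<gamma>)*q/p)*(q*(1+p) - (1+(real m + 1)*p)*(q*q^m))"
      by (rule alg[OF p0 assms(1) assms(3) assms(2) EA EB])
    then show ?thesis using XA m by (simp add: add.commute)
  qed
  show ?thesis using h3 val by (simp add: c_def)
qed

end
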